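(* For $\alpha=(\alpha_0,\alpha_1)\in\mathbb N^2$, $s>0$ and $m\in\{0,1,\dots,\alpha_1\}$, $$\mathfrak H_{\alpha}(s,m)=\frac{(-1)^{\alpha_1+m}}{\alpha!}\,s^{m-\alpha_1}\partial_s^{\alpha_0}s^{|\alpha|-m}\partial_s^{\alpha_1}\frac{s^m\log s}{s-1}=\frac{(-1)^{\alpha_1+m}}{\alpha!}\,\partial_s^{\alpha_1}s^m\partial_s^{\alpha_0}\frac{s^{\alpha_0}\log s}{s-1},$$ and for $m=0$ $$\mathfrak H_\alpha(s,0)=(-1)^{|\alpha|}[1^{\alpha_0+1},s^{\alpha_1+1}]\log=(-1)^{|\alpha|}[1^{\alpha_0},s^{\alpha_1+1}]\mathcal L_0=\frac{(-1)^{\alpha_1}}{\alpha!}\,\partial_s^{|\alpha|}\frac{s^{\alpha_0}\log s}{s-1}.$$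
   Context: For $\alpha=(\alpha_0,\alpha_1)$, $s>0$, $m$ integer with $0\le m\le|\alpha|$: $\mathfrak H_\alpha(s,m):=\int_0^\infty x^{|\alpha|-m}(1+x)^{-\alpha_0-1}(1+sx)^{-\alpha_1-1}\,dx$, where $|\alpha|=\alpha_0+\alpha_1$, $\alpha!=\alpha_0!\alpha_1!$. $\mathcal L_0(s):=[1,s]\log=\frac{\log s}{s-1}$ (value $1$ at $s=1$). Divided differences: for $f$ smooth on an open interval, $[y_0]f=f(y_0)$, $[y_0,\dots,y_n]f=\int_{\{t\ge0,\sum t_j=1\}}f^{(n)}(\sum t_jy_j)\,dt_1\cdots dt_n$ (defined also for repeated arguments); $[1^{k},s^{l}]f$ denotes the divided difference with $k$ arguments equal to $1$ and $l$ equal to $s$. Functions such as $\frac{s^m\log s}{s-1}$ are extended smoothly to $s=1$. *)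

theory Defs
  imports "HOL-Analysis.Analysis"
begin

definition frakH :: "nat \<Rightarrow> nat \<Rightarrow> real \<Rightarrow> nat \<Rightarrow> real" where
  "frakH a0 a1 s m =
     (\<integral>x\<in>{0<..}. x ^ (a0 + a1 - m) / ((1 + x) ^ (a0 + 1) * (1 + s * x) ^ (a1 + 1)) \<partial>lborel)"

definition Lm :: "nat \<Rightarrow> real \<Rightarrow> real" where
  "Lm m s = (if s = 1 then 1 else s ^ m * ln s / (s - 1))"

text \<open>L_0(s) = [1,s] log = log s / (s - 1), value 1 at s = 1.\<close>
definition L0 :: "real \<Rightarrow> real" where
  "L0 s = (if s = 1 then 1 else ln s / (s - 1))"

text \<open>Divided difference [y_0,...,y_n] f via the Hermite--Genocchi simplex integral:
  integral over {t_1..t_n >= 0, sum t_j <= 1} of f^(n)(t_0 y_0 + sum t_j y_j), t_0 = 1 - sum t_j.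
  Coordinates t_1..t_n are stored as t 0 .. t (n-1); the points are ys!0, ..., ys!n.\<close>
definition simplex_std :: "nat \<Rightarrow> (nat \<Rightarrow> real) set" where
  "simplex_std n = {t \<in> extensional {..<n}. (\<forall>j<n. 0 \<le> t j) \<and> (\<Sum>j<n. t j) \<le> 1}"

definition divdiff :: "real list \<Rightarrow> (real \<Rightarrow> real) \<Rightarrow> real" where
  "divdiff ys f =
     (let n = length ys - 1 in
      \<integral>t\<in>simplex_std n.
         (deriv ^^ n) f ((1 - (\<Sum>j<n. t j)) * ys ! 0 + (\<Sum>j<n. t j * ys ! (j + 1)))
       \<partial>(PiM {..<n} (\<lambda>_. lborel)))"

definition divdiff_1s :: "nat \<Rightarrow> real \<Rightarrow> nat \<Rightarrow> (real \<Rightarrow> real) \<Rightarrow> real" where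
  "divdiff_1s k s l f = divdiff (replicate k 1 @ replicate l s) f"

end

theory Submission
  imports Defs "HOL-Real_Asymp.Real_Asymp"
begin


definition smooth_on :: "real set \<Rightarrow> (real \<Rightarrow> real) \<Rightarrow> bool" where
  "smooth_on S f \<longleftrightarrow> (\<forall>n. \<forall>x\<in>S. (deriv ^^ n) f field_differentiable (at x))"

lemma higher_deriv_cong_open:
  assumes "open S" "x \<in> S" "\<And>y. y \<in> S \<Longrightarrow> f y = g y"
  shows "(deriv ^^ k) f x = (deriv ^^ k) g x"
proof (rule higher_deriv_cong_ev)
  show "\<forall>\<^sub>F x in nhds x. f x = g x"
    using eventually_nhds_in_open[OF assms(1,2)] assms(3) by (rule eventually_mono)
qed simp

lemma Suc_choose': "Suc n choose k = (n choose k) + (if k = 0 then 0 else (n choose (k-1)))"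
  by (cases k) simp_all

lemma smooth_on_hasderiv:
  assumes "smooth_on S f" "x \<in> S"
  shows "((deriv ^^ n) f has_field_derivative deriv ((deriv ^^ n) f) x) (at x)"
  using assms unfolding smooth_on_def
  by (simp add: field_differentiable_derivI)

lemma higher_deriv_mult_real:
  fixes z::real
  assumes "smooth_on S f" "smooth_on S g" "open S" and z: "z \<in> S"
    shows "(deriv ^^ n) (\<lambda>w. f w * g w) z =
           (\<Sum>i = 0..n. of_nat (n choose i) * (deriv ^^ i) f z * (deriv ^^ (n-i)) g z)"
using z
proof (induction n arbitrary: z)
  case 0 then show ?case by simp
next
  case (Suc n z)
  have *: "\<And>n. ((deriv ^^ n) f has_field_derivative deriv ((deriv ^^ n) f) z) (at z)"
          "\<And>n. ((deriv ^^ n) g has_field_derivative deriv ((deriv ^^ n) g) z) (at z)"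
    using Suc.prems assms smooth_on_hasderiv by auto
  have sumeq: "(\<Sum>i = 0..n.
               of_nat (n choose i) * (deriv ((deriv ^^ i) f) z * (deriv ^^ (n-i)) g z + deriv ((deriv ^^ (n-i)) g) z * (deriv ^^ i) f z)) =
            g z * deriv ((deriv ^^ n) f) z + (\<Sum>i = 0..n. (deriv ^^ i) f z * (of_nat (Suc n choose i) * (deriv ^^ (Suc n - i)) g z))"
    apply (simp add: Suc_choose' algebra_simps sum.distrib)
    apply (subst (4) sum_Suc_reindex)
    apply (auto simp: algebra_simps Suc_diff_le intro: sum.cong)
    done
  have "((deriv ^^ n) (\<lambda>w. f w * g w) has_field_derivative
         (\<Sum>i = 0..Suc n. (Suc n choose i) * (deriv ^^ i) f z * (deriv ^^ (Suc n - i)) g z))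
        (at z)"
    apply (rule has_field_derivative_transform_within_open
        [of "\<lambda>w. (\<Sum>i = 0..n. of_nat (n choose i) * (deriv ^^ i) f w * (deriv ^^ (n-i)) g w)" _ _ S])
       apply (simp add: algebra_simps)
       apply (rule derivative_eq_intros | simp)+
           apply (auto intro: DERIV_mult * \<open>open S\<close> Suc.prems Suc.IH [symmetric])
    by (metis (no_types, lifting) mult.commute sum.cong sumeq)
  then show ?case
    unfolding funpow.simps o_apply
    by (simp add: DERIV_imp_deriv)
qed


lemma higher_deriv_cpow:
  "(deriv ^^ j) (\<lambda>x::real. c * x ^ p) = (\<lambda>x. c * real (\<Prod>i<j. p - i) * x ^ (p - j))"
proof (induction j)
  case 0 then show ?case by simp
next
  case (Suc j)
  show ?case
  proof (rule ext)
    fix x :: real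
    have "((\<lambda>x. c * real (\<Prod>i<j. p - i) * x ^ (p - j)) has_real_derivative
            c * real (\<Prod>i<j. p - i) * (real (p - j) * x ^ (p - j - Suc 0))) (at x)"
      by (intro DERIV_cmult DERIV_pow)
    moreover have "c * real (\<Prod>i<j. p - i) * (real (p - j) * x ^ (p - j - Suc 0)) = c * real (\<Prod>i<Suc j. p - i) * x ^ (p - Suc j)"
    proof -
      have "p - j - Suc 0 = p - Suc j" by simp
      then show ?thesis by (simp only: prod.lessThan_Suc of_nat_mult)
    qed
    ultimately show "(deriv ^^ Suc j) (\<lambda>x. c * x ^ p) x = c * real (\<Prod>i<Suc j. p - i) * x ^ (p - Suc j)"
      by (simp add: Suc DERIV_imp_deriv)
  qed
qed

lemma smooth_on_cpow: "smooth_on S (\<lambda>x::real. c * x ^ p)"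
  unfolding smooth_on_def higher_deriv_cpow
  by (auto intro!: derivative_intros)

definition J :: "nat \<Rightarrow> nat \<Rightarrow> nat \<Rightarrow> real \<Rightarrow> real" where
  "J b e f s = integral {0..1} (\<lambda>t. t ^ e * (1 - t) ^ f / (1 + t * (s - 1)) ^ b)"

lemma integral_mult_left_real: "integral S (\<lambda>x. c * f x :: real) = c * integral S f"
  using integral_cmul[where c=c and f=f and S=S] by simp

lemma alg1:
  fixes W B t x :: real assumes "W \<noteq> 0"
  shows "(0 * W ^ b - t ^ e * B * (real b * ((0 + (0 * (x - 1) + (1 - 0) * t)) * W ^ (b - Suc 0)))) / (W ^ b * W ^ b)
     = - real b * (t ^ (e + 1) * B / W ^ (b + 1))"
proof (cases b)
  case 0 then show ?thesis by simp
next
  case (Suc k)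
  have "W ^ b * W ^ b = W ^ k * W ^ (b + 1)" unfolding Suc by (simp add: power_add[symmetric])
  moreover have "b - Suc 0 = k" using Suc by simp
  ultimately show ?thesis using assms by (simp add: field_simps)
qed

lemma w_pos: assumes "(s::real) > 0" "t \<in> {0..1}" shows "1 + t * (s - 1) > 0"
proof -
  have "1 + t * (s - 1) = (1 - t) + t * s" by (simp add: algebra_simps)
  moreover have "(1 - t) + t * s > 0"
  proof (cases "t = 1")
    case True then show ?thesis using assms by simp
  next
    case False then have "1 - t > 0" using assms by auto
    moreover have "t * s \<ge> 0" using assms by auto
    ultimately show ?thesis by linarith
  qed
  ultimately show ?thesis by simp
qed

lemma J_deriv:
  assumes "s > 0"
  shows "(J b e f has_real_derivative (- real b * J (b+1) (e+1) f s)) (at s)"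
proof -
  let ?fx = "\<lambda>s t. - real b * (t ^ (e+1) * (1 - t) ^ f / (1 + t * (s - 1)) ^ (b+1))"
  have "((\<lambda>s. integral (cbox 0 1) (\<lambda>t. t ^ e * (1 - t) ^ f / (1 + t * (s - 1)) ^ b))
          has_field_derivative integral (cbox 0 1) (?fx s)) (at s within {0<..})"
  proof (rule leibniz_rule_field_derivative)
    fix x t :: real assume x: "x \<in> {0<..}" and t: "t \<in> cbox 0 1"
    have w: "1 + t * (x - 1) > 0" using w_pos[of x t] x t by auto
    show "((\<lambda>x. t ^ e * (1 - t) ^ f / (1 + t * (x - 1)) ^ b) has_field_derivative ?fx x t) (at x within {0<..})"
      apply (rule derivative_eq_intros refl)+
      using w apply simp
      using w by (intro alg1) simp
  next
    fix x :: real assume x: "x \<in> {0<..}"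
    show "(\<lambda>t. t ^ e * (1 - t) ^ f / (1 + t * (x - 1)) ^ b) integrable_on cbox 0 1"
      apply (intro integrable_continuous continuous_intros)
      using w_pos[of x] x by (fastforce simp: cbox_interval)+
  next
    show "continuous_on ({0<..} \<times> cbox 0 1) (\<lambda>(x, t). ?fx x t)"
      apply (simp only: case_prod_beta')
      apply (intro continuous_intros)
      using w_pos by (fastforce simp: cbox_interval)+
  qed (use assms in auto)
  moreover have "integral (cbox 0 1) (?fx s) = - real b * J (b+1) (e+1) f s"
    unfolding J_def cbox_interval by (simp only: integral_mult_left_real)
  ultimately show ?thesis
    by (simp add: J_def cbox_interval at_within_open[of s "{0<..}"] assms J_def[abs_def])
qed


lemma smooth_on_mult:
  assumes "smooth_on S f" "smooth_on S g" "open S"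
  shows "smooth_on S (\<lambda>x. f x * g x)"
  unfolding smooth_on_def
proof (intro allI ballI)
  fix n x assume x: "x \<in> S"
  have d: "\<And>k y. y \<in> S \<Longrightarrow> (deriv ^^ k) f field_differentiable (at y)"
          "\<And>k y. y \<in> S \<Longrightarrow> (deriv ^^ k) g field_differentiable (at y)"
    using assms unfolding smooth_on_def by auto
  have "(\<lambda>y. \<Sum>i = 0..n. of_nat (n choose i) * (deriv ^^ i) f y * (deriv ^^ (n-i)) g y)
          field_differentiable (at x)"
    using d x by (intro field_differentiable_sum field_differentiable_mult field_differentiable_const) auto
  then obtain D where D: "((\<lambda>y. \<Sum>i = 0..n. of_nat (n choose i) * (deriv ^^ i) f y * (deriv ^^ (n-i)) g y)
          has_field_derivative D) (at x)"
    unfolding field_differentiable_def by blast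
  have "((deriv ^^ n) (\<lambda>x. f x * g x) has_field_derivative D) (at x)"
    by (rule has_field_derivative_transform_within_open[OF D assms(3) x])
       (simp add: higher_deriv_mult_real[OF assms(1,2,3)])
  then show "(deriv ^^ n) (\<lambda>x. f x * g x) field_differentiable (at x)"
    unfolding field_differentiable_def by blast
qed

lemma smooth_on_pow: "smooth_on S (\<lambda>x::real. x ^ p)"
  using smooth_on_cpow[of S 1 p] by simp

lemma smooth_on_id: "smooth_on S (\<lambda>x::real. x)"
  using smooth_on_cpow[of S 1 1] by simp

lemma smooth_on_const: "smooth_on S (\<lambda>x::real. c)"
  using smooth_on_cpow[of S c 0] by simp

lemma higher_deriv_cmult_real:
  assumes "smooth_on S f" "open S" "x \<in> S"
  shows "(deriv ^^ n) (\<lambda>x. c * f x) x = c * (deriv ^^ n) f x"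
proof -
  have "(deriv ^^ n) (\<lambda>x. c * f x) x =
          (\<Sum>i = 0..n. of_nat (n choose i) * (deriv ^^ i) (\<lambda>x. c) x * (deriv ^^ (n-i)) f x)"
    by (rule higher_deriv_mult_real[OF smooth_on_const assms])
  also have "\<dots> = (\<Sum>i \<in> {0}. of_nat (n choose i) * (deriv ^^ i) (\<lambda>x. c) x * (deriv ^^ (n-i)) f x)"
  proof (rule sum.mono_neutral_right)
    show "\<forall>i\<in>{0..n} - {0}. of_nat (n choose i) * (deriv ^^ i) (\<lambda>x. c) x * (deriv ^^ (n - i)) f x = 0"
    proof
      fix i assume i: "i \<in> {0..n} - {0}"
      have "(deriv ^^ i) (\<lambda>x::real. c) = (deriv ^^ i) (\<lambda>x. c * x ^ 0)" by simp
      also have "\<dots> = (\<lambda>x. c * real (\<Prod>j<i. 0 - j) * x ^ (0 - i))" by (rule higher_deriv_cpow)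
      finally show "of_nat (n choose i) * (deriv ^^ i) (\<lambda>x. c) x * (deriv ^^ (n - i)) f x = 0"
        using i by (cases i) auto
    qed
  qed auto
  finally show ?thesis by simp
qed

lemma higher_deriv_linear_mult:
  assumes "smooth_on S g" "open S" "x \<in> S"
  shows "(deriv ^^ Suc b) (\<lambda>x. x * g x) x = x * (deriv ^^ Suc b) g x + real (Suc b) * (deriv ^^ b) g x"
proof -
  have "(deriv ^^ Suc b) (\<lambda>x. x * g x) x =
          (\<Sum>i = 0..Suc b. of_nat (Suc b choose i) * (deriv ^^ i) (\<lambda>x. x) x * (deriv ^^ (Suc b-i)) g x)"
    by (rule higher_deriv_mult_real[OF smooth_on_id assms])
  also have "\<dots> = (\<Sum>i \<in> {0, 1}. of_nat (Suc b choose i) * (deriv ^^ i) (\<lambda>x. x) x * (deriv ^^ (Suc b-i)) g x)"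
  proof (rule sum.mono_neutral_right)
    show "\<forall>i\<in>{0..Suc b} - {0, 1}. of_nat (Suc b choose i) * (deriv ^^ i) (\<lambda>x. x) x * (deriv ^^ (Suc b - i)) g x = 0"
    proof
      fix i assume i: "i \<in> {0..Suc b} - {0, 1}"
      have "(deriv ^^ i) (\<lambda>x::real. x) = (deriv ^^ i) (\<lambda>x. 1 * x ^ 1)" by simp
      also have "\<dots> = (\<lambda>x. 1 * real (\<Prod>j<i. 1 - j) * x ^ (1 - i))" by (rule higher_deriv_cpow)
      finally have "(deriv ^^ i) (\<lambda>x::real. x) x = real (\<Prod>j<i. 1 - j) * x ^ (1 - i)" by simp
      moreover have "(\<Prod>j<i. 1 - j) = (0::nat)"
        using i by (intro prod_zero) (auto intro!: bexI[of _ 1])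
      ultimately show "of_nat (Suc b choose i) * (deriv ^^ i) (\<lambda>x. x) x * (deriv ^^ (Suc b - i)) g x = 0"
        by simp
    qed
  qed auto
  also have "\<dots> = x * (deriv ^^ Suc b) g x + real (Suc b) * (deriv ^^ b) g x"
  proof -
    have "(deriv ^^ 1) (\<lambda>x::real. x) = (deriv ^^ 1) (\<lambda>x. 1 * x ^ 1)" by simp
    also have "\<dots> = (\<lambda>x. 1 * real (\<Prod>j<1. 1 - j) * x ^ (1 - 1))" by (rule higher_deriv_cpow)
    finally have "(deriv ^^ 1) (\<lambda>x::real. x) x = 1" by simp
    then show ?thesis by simp
  qed
  finally show ?thesis .
qed

lemma J_integrable:
  fixes s :: real assumes "s > 0"
  shows "(\<lambda>t::real. t ^ e * (1 - t) ^ f / (1 + t * (s - 1)) ^ b) integrable_on {0..1}"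
  apply (rule integrable_continuous_interval)
  apply (intro continuous_intros)
  using w_pos[OF assms] by fastforce

lemma J_integrable2:
  fixes s :: real assumes "s > 0"
  shows "(\<lambda>t::real. c * (t ^ e * (1 - t) ^ f / (1 + t * (s - 1)) ^ b)) integrable_on {0..1}"
  apply (rule integrable_continuous_interval)
  apply (intro continuous_intros)
  using w_pos[OF assms] by fastforce

lemma J_higher:
  assumes "s > 0"
  shows "(deriv ^^ k) (J b e f) s = (-1) ^ k * pochhammer (real b) k * J (b + k) (e + k) f s"
  using assms
proof (induction k arbitrary: s)
  case 0 then show ?case by simp
next
  case (Suc k)
  have "((\<lambda>s. (-1) ^ k * pochhammer (real b) k * J (b + k) (e + k) f s) has_real_derivative
          (-1) ^ k * pochhammer (real b) k * (- real (b + k) * J (b + k + 1) (e + k + 1) f s)) (at s)"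
    by (intro DERIV_cmult J_deriv Suc.prems)
  then have "((deriv ^^ k) (J b e f) has_real_derivative
          (-1) ^ k * pochhammer (real b) k * (- real (b + k) * J (b + k + 1) (e + k + 1) f s)) (at s)"
    by (rule has_field_derivative_transform_within_open[where S="{0<..}"]) (use Suc in auto)
  then have "(deriv ^^ Suc k) (J b e f) s = (-1) ^ k * pochhammer (real b) k * (- real (b + k) * J (b + k + 1) (e + k + 1) f s)"
    by (simp add: DERIV_imp_deriv)
  then show ?case by (simp add: pochhammer_rec' algebra_simps)
qed

lemma J_smooth: "smooth_on {0<..} (J b e f)"
  unfolding smooth_on_def
proof (intro allI ballI)
  fix n and x :: real assume x: "x \<in> {0<..}"
  have "((\<lambda>s. (-1) ^ n * pochhammer (real b) n * J (b + n) (e + n) f s) has_real_derivative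
          (-1) ^ n * pochhammer (real b) n * (- real (b + n) * J (b + n + 1) (e + n + 1) f x)) (at x)"
    using x by (intro DERIV_cmult J_deriv) auto
  then have "((deriv ^^ n) (J b e f) has_real_derivative
          (-1) ^ n * pochhammer (real b) n * (- real (b + n) * J (b + n + 1) (e + n + 1) f x)) (at x)"
    by (rule has_field_derivative_transform_within_open[where S="{0<..}"]) (use x J_higher in auto)
  then show "(deriv ^^ n) (J b e f) field_differentiable at x"
    unfolding field_differentiable_def by blast
qed

lemma alg2:
  fixes W s t X :: real assumes "W > 0" "W = 1 + t * (s - 1)"
  shows "X / W ^ (b + 1) - s * (t * X / W ^ (b + 2)) = (1 - t) * X / W ^ (b + 2)"
proof -
  have "X / W ^ (b + 1) = W * X / W ^ (b + 2)" using assms(1) by (simp add: field_simps)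
  then have "X / W ^ (b + 1) - s * (t * X / W ^ (b + 2)) = (W - s * t) * X / W ^ (b + 2)"
    by (simp add: diff_divide_distrib algebra_simps)
  also have "W - s * t = 1 - t" using assms(2) by (simp add: algebra_simps)
  finally show ?thesis .
qed

lemma J_rec:
  assumes "s > 0"
  shows "J (b+1) E F s - s * J (b+2) (E+1) F s = J (b+2) E (F+1) s"
proof -
  have "J (b+1) E F s - s * J (b+2) (E+1) F s =
        integral {0..1} (\<lambda>t. t ^ E * (1 - t) ^ F / (1 + t * (s - 1)) ^ (b+1) -
                              s * (t ^ (E+1) * (1 - t) ^ F / (1 + t * (s - 1)) ^ (b+2)))"
  proof -
    have "s * J (b+2) (E+1) F s = integral {0..1} (\<lambda>t. s * (t ^ (E+1) * (1 - t) ^ F / (1 + t * (s - 1)) ^ (b+2)))"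
      by (simp only: J_def integral_mult_left_real)
    then show ?thesis
      unfolding J_def by (simp only: integral_diff[OF J_integrable[OF assms] J_integrable2[OF assms]])
  qed
  also have "\<dots> = J (b+2) E (F+1) s"
    unfolding J_def
  proof (rule integral_cong)
    fix t :: real assume t: "t \<in> {0..1}"
    define W where "W = 1 + t * (s - 1)"
    have W: "W > 0" using w_pos[OF assms t] by (simp add: W_def)
    have "W - s * t = 1 - t" by (simp add: W_def algebra_simps)
    then show "t ^ E * (1 - t) ^ F / (1 + t * (s - 1)) ^ (b + 1) -
          s * (t ^ (E + 1) * (1 - t) ^ F / (1 + t * (s - 1)) ^ (b + 2)) =
          t ^ E * (1 - t) ^ (F + 1) / (1 + t * (s - 1)) ^ (b + 2)"
      unfolding W_def[symmetric] using alg2[OF W W_def, of "t ^ E * (1 - t) ^ F" b]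
      by (simp add: algebra_simps)
  qed
  finally show ?thesis .
qed

lemma smooth_pJ: "smooth_on {0<..} (\<lambda>s. s ^ p * J b e f s)"
  by (intro smooth_on_mult smooth_on_pow J_smooth) auto

lemma L_lemma:
  assumes "p \<le> b" "s > 0"
  shows "(deriv ^^ b) (\<lambda>s. s ^ p * J 1 e f s) s = (-1) ^ (b - p) * fact b * J (b+1) (e+b-p) (f+p) s"
  using assms
proof (induction p arbitrary: b)
  case 0
  have "(deriv ^^ b) (\<lambda>s. s ^ 0 * J 1 e f s) s = (deriv ^^ b) (J 1 e f) s" by simp
  also have "\<dots> = (-1) ^ b * fact b * J (b+1) (e+b) f s"
    using J_higher[OF 0(2), of b 1 e f] by (simp add: pochhammer_fact add.commute)
  finally show ?case by simp
next
  case (Suc p)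
  then obtain b' where b': "b = Suc b'" "p \<le> b'" by (cases b) auto
  have "(\<lambda>s. s ^ Suc p * J 1 e f s) = (\<lambda>s. s * (s ^ p * J 1 e f s))"
    by (simp add: algebra_simps)
  then have "(deriv ^^ b) (\<lambda>s. s ^ Suc p * J 1 e f s) s =
      s * (deriv ^^ Suc b') (\<lambda>s. s ^ p * J 1 e f s) s + real (Suc b') * (deriv ^^ b') (\<lambda>s. s ^ p * J 1 e f s) s"
    using higher_deriv_linear_mult[OF smooth_pJ, of s b'] Suc.prems b' by simp
  also have "\<dots> = s * ((-1) ^ (Suc b' - p) * fact (Suc b') * J (Suc b' + 1) (e + Suc b' - p) (f + p) s)
       + real (Suc b') * ((-1) ^ (b' - p) * fact b' * J (b' + 1) (e + b' - p) (f + p) s)"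
    using Suc.IH[of "Suc b'"] Suc.IH[of b'] b' Suc.prems by simp
  also have "\<dots> = (-1) ^ (b' - p) * fact (Suc b') *
      (J (b' + 1) (e + b' - p) (f + p) s - s * J (b' + 2) (e + b' - p + 1) (f + p) s)"
    using b' by (simp add: Suc_diff_le algebra_simps)
  also have "\<dots> = (-1) ^ (b' - p) * fact (Suc b') * J (b' + 2) (e + b' - p) (f + p + 1) s"
    by (simp only: J_rec[OF Suc.prems(2)])
  finally show ?case using b' by simp
qed


lemma J_inv:
  fixes s :: real
  assumes s: "s > 0" and bk: "b \<le> e + f + 2"
  shows "s ^ b * J b e f s = s ^ (f + 1) * J (e + f + 2 - b) f e s"
proof -
  define k where "k = e + f + 2 - b"
  have bk': "b + k = e + f + 2" using bk by (simp add: k_def)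
  define F where "F = (\<lambda>t::real. t ^ e * (1 - t) ^ f / (1 + t * (s - 1)) ^ b)"
  define g where "g = (\<lambda>u::real. (1 - u) / (1 + u * (s - 1)))"
  define g' where "g' = (\<lambda>u::real. - s / (1 + u * (s - 1)) ^ 2)"
  have Wp: "\<And>u. u \<in> {0..1} \<Longrightarrow> 1 + u * (s - 1) > 0" using w_pos[OF s] by auto
  have gmap: "g ` {0..1} \<subseteq> {0..1}"
  proof
    fix y assume "y \<in> g ` {0..1}"
    then obtain u where u: "u \<in> {0..1}" "y = g u" by auto
    have W: "1 + u * (s - 1) > 0" using Wp u by auto
    have "1 - u \<le> 1 + u * (s - 1)" using u s by (simp add: algebra_simps)
    moreover have "0 \<le> (1 - u) / (1 + u * (s - 1))" using u W by simp
    ultimately show "y \<in> {0..1}" using u W by (auto simp: g_def pos_divide_le_eq)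
  qed
  have "((\<lambda>u. g' u *\<^sub>R F (g u)) has_integral (integral {g 0..g 1} F - integral {g 1..g 0} F)) {0..1}"
  proof (rule has_integral_substitution_general[of "{}" 0 1 g 0 1 F])
    show "continuous_on {0..1} F" unfolding F_def
      by (intro continuous_intros) (use Wp in fastforce)
    show "continuous_on {0..1} g" unfolding g_def
      by (intro continuous_intros) (use Wp in fastforce)
  next
    fix u :: real assume u: "u \<in> {0..1} - {}"
    have W: "1 + u * (s - 1) \<noteq> 0" using Wp u by force
    show "(g has_real_derivative g' u) (at u within {0..1})"
      unfolding g_def g'_def
      apply (rule derivative_eq_intros refl)+
      using W by (auto simp: field_simps power2_eq_square)
  qed (use gmap in auto)
  moreover have "g 0 = 1" "g 1 = 0" using s by (auto simp: g_def)
  ultimately have I: "((\<lambda>u. g' u * F (g u)) has_integral (- J b e f s)) {0..1}"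
    by (simp add: J_def F_def)
  have pt: "s ^ b * (- (g' u * F (g u))) = s ^ (f + 1) * (u ^ f * (1 - u) ^ e / (1 + u * (s - 1)) ^ k)"
    if u: "u \<in> {0..1}" for u
  proof -
    define W where "W = 1 + u * (s - 1)"
    have W: "W > 0" using Wp u by (simp add: W_def)
    have g1: "g u = (1 - u) / W" by (simp add: g_def W_def)
    have g2: "1 - g u = s * u / W" using W by (simp add: g1 field_simps W_def algebra_simps)
    have g3: "1 + g u * (s - 1) = s / W" using W by (simp add: g1 field_simps W_def algebra_simps)
    have "s ^ b * (- (g' u * F (g u))) = s ^ b * (s / W ^ 2 * (((1 - u) / W) ^ e * (s * u / W) ^ f / (s / W) ^ b))"
    proof -
      have "F (g u) = (g u) ^ e * (1 - g u) ^ f / (1 + g u * (s - 1)) ^ b" by (simp add: F_def)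
      also have "\<dots> = ((1 - u) / W) ^ e * (s * u / W) ^ f / (s / W) ^ b" by (subst g2, subst g3, subst g1, rule refl)
      finally show ?thesis by (simp add: g'_def W_def[symmetric])
    qed
    also have "\<dots> = s ^ (f + 1) * (u ^ f * (1 - u) ^ e) * (W ^ b / (W ^ 2 * W ^ e * W ^ f))"
      using W s by (simp add: power_divide power_mult_distrib field_simps)
    also have "W ^ b / (W ^ 2 * W ^ e * W ^ f) = 1 / W ^ k"
    proof -
      have "W ^ 2 * W ^ e * W ^ f = W ^ b * W ^ k" using bk' by (simp add: power_add[symmetric] add_ac)
      then show ?thesis using W by simp
    qed
    finally show ?thesis by (simp add: W_def)
  qed
  have "((\<lambda>u. s ^ b * (- (g' u * F (g u)))) has_integral s ^ b * J b e f s) {0..1}"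
    using has_integral_mult_right[OF has_integral_neg[OF I], of "s ^ b"] by simp
  then have "((\<lambda>u. s ^ (f + 1) * (u ^ f * (1 - u) ^ e / (1 + u * (s - 1)) ^ k)) has_integral s ^ b * J b e f s) {0..1}"
    by (rule has_integral_eq[rotated]) (use pt in auto)
  then have "s ^ b * J b e f s = integral {0..1} (\<lambda>u. s ^ (f + 1) * (u ^ f * (1 - u) ^ e / (1 + u * (s - 1)) ^ k))"
    by (simp add: integral_unique)
  also have "\<dots> = s ^ (f + 1) * J k f e s"
    by (simp only: J_def integral_mult_left_real)
  finally show ?thesis by (simp add: k_def)
qed


lemma frakH_J':
  fixes s :: real
  assumes s: "s > 0" and mm: "m \<le> a0 + a1"
  shows "frakH a0 a1 s m = J (a1 + 1) (a0 + a1 - m) m s"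
proof -
  define E where "E = a0 + a1 - m"
  define F where "F = (\<lambda>x::real. x ^ E / ((1 + x) ^ (a0 + 1) * (1 + s * x) ^ (a1 + 1)))"
  define G where "G = (\<lambda>t::real. t ^ E * (1 - t) ^ m / (1 + t * (s - 1)) ^ (a1 + 1))"
  define g where "g = (\<lambda>t::real. t / (1 - t))"
  define g' where "g' = (\<lambda>t::real. 1 / (1 - t) ^ 2)"
  have Wp: "\<And>u. u \<in> {0..1} \<Longrightarrow> 1 + u * (s - 1) > 0" using w_pos[OF s] by auto
  have Gc: "continuous_on {0..1} G" unfolding G_def
    by (intro continuous_intros) (use Wp in fastforce)
  have pt: "F (g t) * g' t = G t" if t: "0 < t" "t < 1" for t
  proof -
    have t1: "1 - t > 0" using t by simp
    have "1 + g t = 1 / (1 - t)" using t1 by (simp add: g_def field_simps)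
    moreover have "1 + s * g t = (1 + t * (s - 1)) / (1 - t)" using t1 by (simp add: g_def field_simps)
    ultimately have "F (g t) * g' t = (t / (1 - t)) ^ E / ((1 / (1 - t)) ^ (a0 + 1) * ((1 + t * (s - 1)) / (1 - t)) ^ (a1 + 1))
        * (1 / (1 - t) ^ 2)"
      by (simp add: F_def g'_def g_def)
    also have "\<dots> = t ^ E * (1 - t) ^ (a0 + 1) * (1 - t) ^ (a1 + 1) / ((1 - t) ^ E * (1 - t) ^ 2 * (1 + t * (s - 1)) ^ (a1 + 1))"
      using t1 Wp[of t] t by (simp add: power_divide field_simps)
    also have "\<dots> = G t"
    proof -
      have "a0 + 1 + (a1 + 1) = m + (E + 2)" using mm by (simp add: E_def)
      then have "(1 - t) ^ (a0 + 1) * (1 - t) ^ (a1 + 1) = (1 - t) ^ m * ((1 - t) ^ E * (1 - t) ^ 2)"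
        by (simp only: power_add[symmetric])
      then have eq: "t ^ E * (1 - t) ^ (a0 + 1) * (1 - t) ^ (a1 + 1) = (t ^ E * (1 - t) ^ m) * ((1 - t) ^ E * (1 - t) ^ 2)"
        by (simp add: mult.assoc)
      have alg6: "\<And>X K W::real. K \<noteq> 0 \<Longrightarrow> (X * K) / (K * W) = X / W" by simp
      show ?thesis unfolding G_def eq by (rule alg6) (use t1 in simp)
    qed
    finally show ?thesis .
  qed
  have intG: "set_integrable lborel {0..1} G"
    by (rule borel_integrable_atLeastAtMost'[OF Gc])
  have intfg: "set_integrable lborel (einterval 0 1) (\<lambda>x. F (g x) * g' x)"
  proof -
    have "set_integrable lborel (einterval 0 1) G"
      by (rule set_integrable_subset[OF intG]) (auto simp: einterval_def)
    then show ?thesis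
      by (rule set_integrable_cong[THEN iffD1, rotated -1]) (auto simp: einterval_def pt)
  qed
  have sub: "(LBINT x=0..\<infinity>. F x) = (LBINT x=0..1. F (g x) * g' x)"
  proof (rule interval_integral_substitution_nonneg(2)[of 0 1 g g' F 0 \<infinity>])
    show "(0::ereal) < 1" by simp
  next
    fix x :: real assume x: "0 < ereal x" "ereal x < 1"
    then have x': "0 < x" "x < 1" by (auto simp: zero_ereal_def one_ereal_def)
    show "(g has_real_derivative g' x) (at x)" unfolding g_def g'_def
      apply (rule derivative_eq_intros refl)+
      using x' by (auto simp: field_simps power2_eq_square)
    have "g x \<ge> 0" using x' by (simp add: g_def)
    have sg: "1 + s * g x > 0" using \<open>g x \<ge> 0\<close> s by (simp add: add_pos_nonneg)
    then show "isCont F (g x)" unfolding F_def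
      using \<open>g x \<ge> 0\<close> by (intro continuous_intros) auto
    show "isCont g' x" unfolding g'_def using x' by (intro continuous_intros) auto
    show "0 \<le> F (g x)" using \<open>g x \<ge> 0\<close> s unfolding F_def by simp
  next
    fix x :: real assume "0 \<le> ereal x" "ereal x \<le> 1"
    show "0 \<le> g' x" by (simp add: g'_def)
  next
    show "((ereal \<circ> g \<circ> real_of_ereal) \<longlongrightarrow> 0) (at_right 0)"
      unfolding zero_ereal_def ereal_tendsto_simps g_def by real_asymp
    show "((ereal \<circ> g \<circ> real_of_ereal) \<longlongrightarrow> \<infinity>) (at_left 1)"
      unfolding one_ereal_def ereal_tendsto_simps g_def by real_asymp
  qed (rule intfg)
  have "frakH a0 a1 s m = (LBINT x=0..\<infinity>. F x)"
    by (simp add: frakH_def F_def E_def interval_lebesgue_integral_le_eq zero_ereal_def)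
  also note sub
  also have "(LBINT x=0..1. F (g x) * g' x) = (LBINT x=0..1. G x)"
    by (rule interval_integral_cong) (auto simp: einterval_def pt)
  also have "\<dots> = integral {0..1} G"
    using interval_integral_eq_integral[of 0 1 G] intG by (simp add: zero_ereal_def one_ereal_def)
  also have "\<dots> = J (a1 + 1) (a0 + a1 - m) m s"
    by (simp add: J_def G_def E_def)
  finally show ?thesis .
qed


lemma J100:
  fixes s :: real assumes s: "s > 0"
  shows "J 1 0 0 s = L0 s"
proof (cases "s = 1")
  case True
  then show ?thesis by (simp add: J_def L0_def)
next
  case False
  have "((\<lambda>t. 1 / (1 + t * (s - 1))) has_integral
          (ln (1 + 1 * (s - 1)) / (s - 1) - ln (1 + 0 * (s - 1)) / (s - 1))) {0..1}"
  proof (rule fundamental_theorem_of_calculus)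
    fix t :: real assume t: "t \<in> {0..1}"
    have W: "1 + t * (s - 1) > 0" using w_pos[OF s t] .
    have d1: "((\<lambda>t. 1 + t * (s - 1)) has_real_derivative (s - 1)) (at t within {0..1})"
      by (rule derivative_eq_intros refl)+ simp
    have "((\<lambda>t. ln (1 + t * (s - 1))) has_real_derivative 1 / (1 + t * (s - 1)) * (s - 1)) (at t within {0..1})"
      by (rule DERIV_chain2[OF _ d1]) (use W in \<open>auto intro: derivative_eq_intros\<close>)
    from DERIV_cdivide[OF this, of "s - 1"]
    have "((\<lambda>t. ln (1 + t * (s - 1)) / (s - 1)) has_real_derivative 1 / (1 + t * (s - 1))) (at t within {0..1})"
      using False by simp
    then show "((\<lambda>t. ln (1 + t * (s - 1)) / (s - 1)) has_vector_derivative 1 / (1 + t * (s - 1))) (at t within {0..1})"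
      by (simp add: has_real_derivative_iff_has_vector_derivative)
  qed simp
  then have "J 1 0 0 s = ln s / (s - 1)" unfolding J_def by (simp add: integral_unique)
  then show ?thesis using False by (simp add: L0_def)
qed

lemma Lm_eq: "Lm m s = s ^ m * L0 s"
  by (simp add: Lm_def L0_def)

lemma Lm_J: "s > 0 \<Longrightarrow> Lm m s = s ^ m * J 1 0 0 s"
  by (metis Lm_eq J100)

lemma higher_Lm:
  assumes "s > 0" "m \<le> b"
  shows "(deriv ^^ b) (Lm m) s = (-1) ^ (b - m) * fact b * J (b + 1) (b - m) m s"
proof -
  have "(deriv ^^ b) (Lm m) s = (deriv ^^ b) (\<lambda>s. s ^ m * J 1 0 0 s) s"
    by (rule higher_deriv_cong_open[of "{0<..}"]) (use assms Lm_J in auto)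
  also have "\<dots> = (-1) ^ (b - m) * fact b * J (b + 1) (b - m) m s"
    using L_lemma[OF assms(2,1), of 0 0] by simp
  finally show ?thesis .
qed

lemma J_inv_div:
  fixes s :: real
  assumes s: "s > 0" and bk: "b \<le> e + f + 2"
  shows "J b e f s = s ^ (f + 1) / s ^ b * J (e + f + 2 - b) f e s"
  using J_inv[OF assms] s by (simp add: field_simps)

lemma frakH_J: "s > 0 \<Longrightarrow> m \<le> a0 + a1 \<Longrightarrow> frakH a0 a1 s m = J (a1 + 1) (a0 + a1 - m) m s"
  by (rule frakH_J')

lemma alg3: fixes A B F G X :: real
  shows "A * B = 1 \<Longrightarrow> F \<noteq> 0 \<Longrightarrow> G \<noteq> 0 \<Longrightarrow> X = A / (F * G) * (F * (B * G * X))"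
  by (simp add: field_simps)

lemma alg4: fixes A B F G S X :: real
  shows "A * B = 1 \<Longrightarrow> F \<noteq> 0 \<Longrightarrow> G \<noteq> 0 \<Longrightarrow> S \<noteq> 0 \<Longrightarrow>
     X = A / (F * G) * (1 / S) * (B * G * (F * (S * X)))"
  by (simp add: field_simps)

lemma alg5: fixes A F G N X :: real
  shows "A * A = 1 \<Longrightarrow> A / (F * G) * (A * N * X) = N / (F * G) * X"
  by (simp add: field_simps)

lemma claim2:
  fixes s :: real
  assumes s: "s > 0" and m: "m \<le> a1"
  shows "frakH a0 a1 s m = (-1) ^ (a1 + m) / (fact a0 * fact a1) *
              (deriv ^^ a1) (\<lambda>t. t ^ m * (deriv ^^ a0) (Lm a0) t) s"
proof -
  have A: "t ^ m * (deriv ^^ a0) (Lm a0) t = fact a0 * (t ^ m * J 1 a0 0 t)" if t: "t > 0" for t :: real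
  proof -
    have "(deriv ^^ a0) (Lm a0) t = fact a0 * J (a0 + 1) 0 a0 t"
      using higher_Lm[OF t, of a0 a0] by simp
    also have "J (a0 + 1) 0 a0 t = J 1 a0 0 t"
      using J_inv_div[OF t, of "a0 + 1" 0 a0] t by simp
    finally show ?thesis by simp
  qed
  have "(deriv ^^ a1) (\<lambda>t. t ^ m * (deriv ^^ a0) (Lm a0) t) s =
        (deriv ^^ a1) (\<lambda>t. fact a0 * (t ^ m * J 1 a0 0 t)) s"
    by (rule higher_deriv_cong_open[of "{0<..}"]) (use s A in auto)
  also have "\<dots> = fact a0 * (deriv ^^ a1) (\<lambda>t. t ^ m * J 1 a0 0 t) s"
    by (rule higher_deriv_cmult_real[OF smooth_pJ]) (use s in auto)
  also have "\<dots> = fact a0 * ((-1) ^ (a1 - m) * fact a1 * J (a1 + 1) (a0 + a1 - m) m s)"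
    using L_lemma[OF m s, of a0 0] m by simp
  finally have D: "(deriv ^^ a1) (\<lambda>t. t ^ m * (deriv ^^ a0) (Lm a0) t) s =
      fact a0 * ((-1) ^ (a1 - m) * fact a1 * J (a1 + 1) (a0 + a1 - m) m s)" .
  have sgn: "(-1::real) ^ (a1 + m) * (-1) ^ (a1 - m) = 1"
  proof -
    have "(-1::real) ^ (a1 + m) * (-1) ^ (a1 - m) = (-1) ^ (2 * a1)"
      using m by (simp add: power_add[symmetric])
    then show ?thesis by (simp add: power_mult)
  qed
  have mm: "m \<le> a0 + a1" using m by simp
  show ?thesis unfolding D frakH_J[OF s mm]
    by (rule alg3) (use m sgn in auto)
qed

lemma claim1:
  fixes s :: real
  assumes s: "s > 0" and m: "m \<le> a1"
  shows "frakH a0 a1 s m = (-1) ^ (a1 + m) / (fact a0 * fact a1) * (1 / s ^ (a1 - m)) *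
              (deriv ^^ a0) (\<lambda>t. t ^ (a0 + a1 - m) * (deriv ^^ a1) (Lm m) t) s"
proof -
  define c1 :: real where "c1 = (-1) ^ (a1 - m) * fact a1"
  have A: "t ^ (a0 + a1 - m) * (deriv ^^ a1) (Lm m) t = c1 * (t ^ a0 * J 1 m (a1 - m) t)"
    if t: "t > 0" for t :: real
  proof -
    have "(deriv ^^ a1) (Lm m) t = c1 * J (a1 + 1) (a1 - m) m t"
      using higher_Lm[OF t m] by (simp add: c1_def)
    moreover have "J (a1 + 1) (a1 - m) m t = t ^ (m + 1) / t ^ (a1 + 1) * J 1 m (a1 - m) t"
      using J_inv_div[OF t, of "a1 + 1" "a1 - m" m] m by simp
    moreover have "t ^ (a0 + a1 - m) * (t ^ (m + 1) / t ^ (a1 + 1)) = t ^ a0"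
    proof -
      have "t ^ (a0 + a1 - m) * t ^ (m + 1) = t ^ a0 * t ^ (a1 + 1)"
        using m by (simp add: power_add[symmetric])
      then show ?thesis using t by (simp add: field_simps)
    qed
    ultimately show ?thesis by (simp add: mult_ac)
  qed
  have "(deriv ^^ a0) (\<lambda>t. t ^ (a0 + a1 - m) * (deriv ^^ a1) (Lm m) t) s =
        (deriv ^^ a0) (\<lambda>t. c1 * (t ^ a0 * J 1 m (a1 - m) t)) s"
    by (rule higher_deriv_cong_open[of "{0<..}"]) (use s A in auto)
  also have "\<dots> = c1 * (deriv ^^ a0) (\<lambda>t. t ^ a0 * J 1 m (a1 - m) t) s"
    by (rule higher_deriv_cmult_real[OF smooth_pJ]) (use s in auto)
  also have "\<dots> = c1 * (fact a0 * J (a0 + 1) m (a0 + a1 - m) s)"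
    using L_lemma[OF order.refl s, of a0 m "a1 - m"] m by (simp add: add.commute)
  also have "J (a0 + 1) m (a0 + a1 - m) s = s ^ (a1 - m) * J (a1 + 1) (a0 + a1 - m) m s"
  proof -
    have "J (a0 + 1) m (a0 + a1 - m) s = s ^ (a0 + a1 - m + 1) / s ^ (a0 + 1) * J (a1 + 1) (a0 + a1 - m) m s"
      using J_inv_div[OF s, of "a0 + 1" m "a0 + a1 - m"] m by simp
    moreover have "s ^ (a0 + a1 - m + 1) / s ^ (a0 + 1) = s ^ (a1 - m)"
    proof -
      have e: "a0 + a1 - m + 1 = (a1 - m) + (a0 + 1)" using m by simp
      have "s ^ (a0 + a1 - m + 1) = s ^ (a1 - m) * s ^ (a0 + 1)"
        by (simp only: e power_add)
      then show ?thesis using s by simp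
    qed
    ultimately show ?thesis by simp
  qed
  finally have D: "(deriv ^^ a0) (\<lambda>t. t ^ (a0 + a1 - m) * (deriv ^^ a1) (Lm m) t) s =
     c1 * (fact a0 * (s ^ (a1 - m) * J (a1 + 1) (a0 + a1 - m) m s))" .
  have sgn: "(-1::real) ^ (a1 + m) * (-1) ^ (a1 - m) = 1"
  proof -
    have "(-1::real) ^ (a1 + m) * (-1) ^ (a1 - m) = (-1) ^ (2 * a1)"
      using m by (simp add: power_add[symmetric])
    then show ?thesis by (simp add: power_mult)
  qed
  have mm: "m \<le> a0 + a1" using m by simp
  show ?thesis unfolding D frakH_J[OF s mm] c1_def
    by (rule alg4) (use m sgn s in auto)
qed

lemma claim5:
  fixes s :: real
  assumes s: "s > 0"
  shows "frakH a0 a1 s 0 = (-1) ^ a1 / (fact a0 * fact a1) * (deriv ^^ (a0 + a1)) (Lm a0) s"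
proof -
  have "(deriv ^^ (a0 + a1)) = (deriv ^^ a1) \<circ> (deriv ^^ a0)"
    by (metis add.commute funpow_add)
  then have "(deriv ^^ (a0 + a1)) (Lm a0) = (deriv ^^ a1) ((deriv ^^ a0) (Lm a0))"
    by (metis comp_apply)
  then have "(deriv ^^ (a0 + a1)) (Lm a0) = (deriv ^^ a1) (\<lambda>t. t ^ 0 * (deriv ^^ a0) (Lm a0) t)"
    by simp
  then show ?thesis using claim2[OF s, of 0 a1 a0] by simp
qed

lemma H0_J:
  fixes s :: real
  assumes s: "s > 0"
  shows "frakH a0 a1 s 0 = fact (a0 + a1) / (fact a0 * fact a1) * J (a0 + a1 + 1) a1 a0 s"
proof -
  have "(deriv ^^ (a0 + a1)) (Lm a0) s = (-1) ^ a1 * fact (a0 + a1) * J (a0 + a1 + 1) a1 a0 s"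
    using higher_Lm[OF s, of a0 "a0 + a1"] by simp
  then show ?thesis unfolding claim5[OF s]
    by (simp only: alg5[of "(-1) ^ a1"]) (simp flip: power_add)
qed


abbreviation PM :: "nat set \<Rightarrow> (nat \<Rightarrow> real) measure" where
  "PM I \<equiv> PiM I (\<lambda>_. lborel)"

definition posI :: "nat set \<Rightarrow> (nat \<Rightarrow> real) \<Rightarrow> ennreal" where
  "posI I t = (\<Prod>i\<in>I. indicator {0..} (t i))"

lemma posI_measurable[measurable]: "finite I \<Longrightarrow> posI I \<in> borel_measurable (PM I)"
  unfolding posI_def by measurable

lemma test_meas:
  assumes [measurable]: "h \<in> borel_measurable (borel :: real measure)" "finite I"
  shows "(\<lambda>t. posI I t * h (\<Sum>i\<in>I. t i)) \<in> borel_measurable (PM I)"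
  by measurable

lemma tonelli_test:
  fixes F :: "real \<Rightarrow> real \<Rightarrow> ennreal"
  assumes "case_prod F \<in> borel_measurable (lborel \<Otimes>\<^sub>M lborel)"
  shows "(\<integral>\<^sup>+x. \<integral>\<^sup>+y. F x y \<partial>lborel \<partial>lborel) = (\<integral>\<^sup>+y. \<integral>\<^sup>+x. F x y \<partial>lborel \<partial>lborel)"
  using lborel_pair.Fubini'[OF assms] by simp

lemma shift_nn:
  fixes h :: "real \<Rightarrow> ennreal"
  assumes [measurable]: "h \<in> borel_measurable borel"
  shows "(\<integral>\<^sup>+y. indicator {0..} y * h (y + u) \<partial>lborel) = (\<integral>\<^sup>+v. indicator {0..} (v - u) * h v \<partial>lborel)"
proof -
  have "(\<integral>\<^sup>+v. indicator {0..} (v - u) * h v \<partial>lborel) = ennreal \<bar>1\<bar> * (\<integral>\<^sup>+x. indicator {0..} (u + 1 * x - u) * h (u + 1 * x) \<partial>lborel)"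
    by (rule nn_integral_real_affine) auto
  also have "\<dots> = (\<integral>\<^sup>+y. indicator {0..} y * h (y + u) \<partial>lborel)"
    by (simp add: indicator_def add.commute)
  finally show ?thesis ..
qed

lemma powint_nn:
  assumes "v \<ge> 0"
  shows "(\<integral>\<^sup>+u. indicator {0..v} u * ennreal (u ^ n / fact n) \<partial>lborel) = ennreal (v ^ Suc n / fact (Suc n))"
proof -
  have "((\<lambda>u::real. u ^ n / fact n) has_integral (v ^ Suc n / fact (Suc n) - 0 ^ Suc n / fact (Suc n))) {0..v}"
  proof (rule fundamental_theorem_of_calculus)
    fix x :: real assume "x \<in> {0..v}"
    have "((\<lambda>u::real. u ^ Suc n / fact (Suc n)) has_real_derivative (real (Suc n) * x ^ n / fact (Suc n))) (at x within {0..v})"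
      using DERIV_cdivide[OF DERIV_pow[of "Suc n" x "{0..v}"], of "fact (Suc n)"] by simp
    moreover have "real (Suc n) * x ^ n / fact (Suc n) = x ^ n / fact n"
    proof -
      have "fact (Suc n) = real (Suc n) * (fact n :: real)" by (simp only: fact_Suc)
      then show ?thesis by (simp del: of_nat_Suc)
    qed
    ultimately show "((\<lambda>u::real. u ^ Suc n / fact (Suc n)) has_vector_derivative x ^ n / fact n) (at x within {0..v})"
      by (simp add: has_real_derivative_iff_has_vector_derivative)
  qed (use assms in simp)
  then have "((\<lambda>u::real. u ^ n / fact n) has_integral (v ^ Suc n / fact (Suc n))) {0..v}" by simp
  from nn_integral_has_integral_lebesgue[OF _ this]
  have "(\<integral>\<^sup>+u. ennreal (indicator {0..v} u * (u ^ n / fact n)) \<partial>lborel) = ennreal (v ^ Suc n / fact (Suc n))"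
    by simp
  then show ?thesis
    by (simp add: indicator_mult_ennreal mult_ac)
qed


lemma posI_insert:
  assumes "finite I" "i \<notin> I"
  shows "posI (insert i I) (x(i := y)) = indicator {0..} y * posI I x"
proof -
  have "posI (insert i I) (x(i := y)) = indicator {0..} y * (\<Prod>j\<in>I. indicator {0..} ((x(i := y)) j))"
    unfolding posI_def using assms by simp
  also have "(\<Prod>j\<in>I. indicator {0..} ((x(i := y)) j)) = posI I x"
    unfolding posI_def using assms by (intro prod.cong) auto
  finally show ?thesis .
qed

lemma sum_insert_upd:
  assumes "finite I" "i \<notin> I"
  shows "(\<Sum>j\<in>insert i I. (x(i := y)) j) = y + (\<Sum>j\<in>I. x j :: real)"
proof -
  have "(\<Sum>j\<in>insert i I. (x(i := y)) j) = y + (\<Sum>j\<in>I. (x(i := y)) j)"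
    using assms by simp
  also have "(\<Sum>j\<in>I. (x(i := y)) j) = (\<Sum>j\<in>I. x j)"
    using assms by (intro sum.cong) auto
  finally show ?thesis .
qed

lemma D1:
  fixes h :: "real \<Rightarrow> ennreal"
  assumes I: "finite I" and hm: "h \<in> borel_measurable borel"
  shows "(\<integral>\<^sup>+t. posI I t * h (\<Sum>i\<in>I. t i) \<partial>PM I) =
    (if I = {} then h 0 else \<integral>\<^sup>+u. indicator {0..} u * h u * ennreal (u ^ (card I - 1) / fact (card I - 1)) \<partial>lborel)"
  using I hm
proof (induction I arbitrary: h rule: finite_induct)
  case empty
  then show ?case by (simp add: PiM_empty posI_def nn_integral_count_space_finite)
next
  case (insert i I)
  note hm[measurable] = insert.prems
  interpret product_sigma_finite "\<lambda>_. lborel :: real measure" by standard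
  have meas: "(\<lambda>t. posI (insert i I) t * h (\<Sum>j\<in>insert i I. t j)) \<in> borel_measurable (PM (insert i I))"
    using insert.hyps(1) by (intro borel_measurable_times_ennreal posI_measurable measurable_compose[OF _ hm]) auto
  have "(\<integral>\<^sup>+t. posI (insert i I) t * h (\<Sum>j\<in>insert i I. t j) \<partial>PM (insert i I)) =
     (\<integral>\<^sup>+y. \<integral>\<^sup>+x. posI (insert i I) (x(i := y)) * h (\<Sum>j\<in>insert i I. (x(i := y)) j) \<partial>PM I \<partial>lborel)"
    by (rule product_nn_integral_insert_rev[OF insert.hyps(1,2) meas])
  also have "\<dots> = (\<integral>\<^sup>+y. indicator {0..} y * (\<integral>\<^sup>+x. posI I x * h (y + (\<Sum>j\<in>I. x j)) \<partial>PM I) \<partial>lborel)"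
  proof (rule nn_integral_cong)
    fix y :: real
    have "(\<integral>\<^sup>+x. posI (insert i I) (x(i := y)) * h (\<Sum>j\<in>insert i I. (x(i := y)) j) \<partial>PM I) =
          (\<integral>\<^sup>+x. indicator {0..} y * (posI I x * h (y + (\<Sum>j\<in>I. x j))) \<partial>PM I)"
      by (simp only: posI_insert[OF insert.hyps(1,2)] sum_insert_upd[OF insert.hyps(1,2)] mult_ac)
    also have "\<dots> = indicator {0..} y * (\<integral>\<^sup>+x. posI I x * h (y + (\<Sum>j\<in>I. x j)) \<partial>PM I)"
      using insert.hyps(1) by (intro nn_integral_cmult) measurable
    finally show "(\<integral>\<^sup>+x. posI (insert i I) (x(i := y)) * h (\<Sum>j\<in>insert i I. (x(i := y)) j) \<partial>PM I) =
          indicator {0..} y * (\<integral>\<^sup>+x. posI I x * h (y + (\<Sum>j\<in>I. x j)) \<partial>PM I)" .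
  qed
  also have "\<dots> = (\<integral>\<^sup>+y. indicator {0..} y * (if I = {} then h (y + 0) else
       \<integral>\<^sup>+u. indicator {0..} u * h (y + u) * ennreal (u ^ (card I - 1) / fact (card I - 1)) \<partial>lborel) \<partial>lborel)"
  proof (rule nn_integral_cong)
    fix y :: real
    have "(\<lambda>u. h (y + u)) \<in> borel_measurable borel" by measurable
    from insert.IH[OF this] show "indicator {0..} y * (\<integral>\<^sup>+x. posI I x * h (y + (\<Sum>j\<in>I. x j)) \<partial>PM I) =
        indicator {0..} y * (if I = {} then h (y + 0) else
       \<integral>\<^sup>+u. indicator {0..} u * h (y + u) * ennreal (u ^ (card I - 1) / fact (card I - 1)) \<partial>lborel)"
      by simp
  qed
  also have "\<dots> = \<integral>\<^sup>+u. indicator {0..} u * h u * ennreal (u ^ (card (insert i I) - 1) / fact (card (insert i I) - 1)) \<partial>lborel"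
  proof (cases "I = {}")
    case True
    then show ?thesis by (simp add: mult_ac)
  next
    case False
    define c where "c = card I"
    have c: "c \<ge> 1" "card (insert i I) - 1 = c" using False insert.hyps by (auto simp: c_def card_gt_0_iff Suc_le_eq)
    define w where "w = (\<lambda>u::real. ennreal (u ^ (c - 1) / fact (c - 1)))"
    have wm[measurable]: "w \<in> borel_measurable borel" unfolding w_def by measurable
    have "(\<integral>\<^sup>+y. indicator {0..} y * (\<integral>\<^sup>+u. indicator {0..} u * h (y + u) * w u \<partial>lborel) \<partial>lborel) =
          (\<integral>\<^sup>+y. \<integral>\<^sup>+u. indicator {0..} y * (indicator {0..} u * h (y + u) * w u) \<partial>lborel \<partial>lborel)"
      by (intro nn_integral_cong nn_integral_cmult[symmetric]) measurable
    also have "\<dots> = (\<integral>\<^sup>+u. \<integral>\<^sup>+y. indicator {0..} y * (indicator {0..} u * h (y + u) * w u) \<partial>lborel \<partial>lborel)"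
      by (rule lborel_pair.Fubini'[symmetric]) measurable
    also have "\<dots> = (\<integral>\<^sup>+u. (indicator {0..} u * w u) * (\<integral>\<^sup>+y. indicator {0..} y * h (y + u) \<partial>lborel) \<partial>lborel)"
      by (intro nn_integral_cong) (subst nn_integral_cmult[symmetric], measurable, simp add: mult_ac)
    also have "\<dots> = (\<integral>\<^sup>+u. (indicator {0..} u * w u) * (\<integral>\<^sup>+v. indicator {0..} (v - u) * h v \<partial>lborel) \<partial>lborel)"
      by (intro nn_integral_cong) (simp add: shift_nn[OF hm])
    also have "\<dots> = (\<integral>\<^sup>+u. \<integral>\<^sup>+v. (indicator {0..} u * w u) * (indicator {0..} (v - u) * h v) \<partial>lborel \<partial>lborel)"
      by (intro nn_integral_cong nn_integral_cmult[symmetric]) measurable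
    also have "\<dots> = (\<integral>\<^sup>+v. \<integral>\<^sup>+u. (indicator {0..} u * w u) * (indicator {0..} (v - u) * h v) \<partial>lborel \<partial>lborel)"
    proof (rule lborel_pair.Fubini')
      have [measurable]: "h \<in> borel_measurable lborel" using hm by simp
      show "(\<lambda>(v, u). indicator {0..} u * w u * (indicator {0..} (v - u) * h v)) \<in> borel_measurable (lborel \<Otimes>\<^sub>M lborel)"
        by measurable
    qed
    also have "\<dots> = (\<integral>\<^sup>+v. h v * (\<integral>\<^sup>+u. indicator {0..v} u * w u \<partial>lborel) \<partial>lborel)"
    proof (rule nn_integral_cong)
      fix v :: real
      have "(\<integral>\<^sup>+u. (indicator {0..} u * w u) * (indicator {0..} (v - u) * h v) \<partial>lborel) =
            (\<integral>\<^sup>+u. h v * (indicator {0..v} u * w u) \<partial>lborel)"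
        by (intro nn_integral_cong) (auto simp: indicator_def mult_ac)
      also have "\<dots> = h v * (\<integral>\<^sup>+u. indicator {0..v} u * w u \<partial>lborel)"
        by (rule nn_integral_cmult) measurable
      finally show "(\<integral>\<^sup>+u. (indicator {0..} u * w u) * (indicator {0..} (v - u) * h v) \<partial>lborel) =
            h v * (\<integral>\<^sup>+u. indicator {0..v} u * w u \<partial>lborel)" .
    qed
    also have "\<dots> = (\<integral>\<^sup>+v. indicator {0..} v * h v * ennreal (v ^ c / fact c) \<partial>lborel)"
    proof (rule nn_integral_cong)
      fix v :: real
      show "h v * (\<integral>\<^sup>+u. indicator {0..v} u * w u \<partial>lborel) = indicator {0..} v * h v * ennreal (v ^ c / fact c)"
      proof (cases "v \<ge> 0")
        case True
        have "(\<integral>\<^sup>+u. indicator {0..v} u * w u \<partial>lborel) = ennreal (v ^ Suc (c - 1) / fact (Suc (c - 1)))"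
          unfolding w_def by (rule powint_nn[OF True])
        then show ?thesis using True c by simp
      next
        case False
        then have "\<And>u. indicator {0..v} u * w u = 0" by (auto simp: indicator_def)
        then show ?thesis using False by simp
      qed
    qed
    finally show ?thesis using c False by (simp add: w_def c_def)
  qed
  finally show ?case using insert.hyps by simp
qed


lemma posI_merge:
  assumes "A \<inter> B = {}" "finite A" "finite B"
  shows "posI (A \<union> B) (merge A B (x, y)) = posI A x * posI B y"
proof -
  have "posI (A \<union> B) (merge A B (x, y)) = (\<Prod>i\<in>A. indicator {0..} (merge A B (x, y) i)) * (\<Prod>i\<in>B. indicator {0..} (merge A B (x, y) i))"
    unfolding posI_def using assms by (simp add: prod.union_disjoint)
  also have "\<dots> = posI A x * posI B y"
    unfolding posI_def using assms by (intro arg_cong2[where f="(*)"] prod.cong) auto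
  finally show ?thesis .
qed

lemma sum_merge:
  assumes "A \<inter> B = {}" "finite A" "finite B"
  shows "(\<Sum>i\<in>A \<union> B. merge A B (x, y) i) = (\<Sum>i\<in>A. x i) + (\<Sum>i\<in>B. y i :: real)"
proof -
  have "(\<Sum>i\<in>A \<union> B. merge A B (x, y) i) = (\<Sum>i\<in>A. merge A B (x, y) i) + (\<Sum>i\<in>B. merge A B (x, y) i)"
    using assms by (simp add: sum.union_disjoint)
  also have "\<dots> = (\<Sum>i\<in>A. x i) + (\<Sum>i\<in>B. y i)"
    using assms by (intro arg_cong2[where f="(+)"] sum.cong) auto
  finally show ?thesis .
qed

lemma sum_merge_B:
  assumes "A \<inter> B = {}"
  shows "(\<Sum>i\<in>B. merge A B (x, y) i) = (\<Sum>i\<in>B. y i :: real)"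
  using assms by (intro sum.cong) auto

lemma D2:
  fixes \<phi> :: "real \<Rightarrow> ennreal" and A B :: "nat set"
  assumes AB: "A \<inter> B = {}" "finite A" "finite B" "B \<noteq> {}"
    and phim[measurable]: "\<phi> \<in> borel_measurable borel"
  shows "(\<integral>\<^sup>+t. posI (A \<union> B) t * indicator {..1} (\<Sum>i\<in>A \<union> B. t i) * \<phi> (\<Sum>i\<in>B. t i) \<partial>PM (A \<union> B)) =
    (\<integral>\<^sup>+u. indicator {0..1} u * \<phi> u * ennreal (u ^ (card B - 1) / fact (card B - 1)) *
        ennreal ((1 - u) ^ card A / fact (card A)) \<partial>lborel)"
proof -
  interpret product_sigma_finite "\<lambda>_. lborel :: real measure" by standard
  define m where "m = card B"
  define k where "k = card A"
  define wm where "wm = (\<lambda>u::real. ennreal (u ^ (m - 1) / fact (m - 1)))"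
  have wmm[measurable]: "wm \<in> borel_measurable borel" unfolding wm_def by measurable
  define \<Psi> where "\<Psi> = (\<lambda>w::real. \<integral>\<^sup>+u. indicator {0..} u * (indicator {..1} (w + u) * \<phi> u) * wm u \<partial>lborel)"
  have Psim[measurable]: "\<Psi> \<in> borel_measurable borel" unfolding \<Psi>_def by measurable
  have fm: "(\<lambda>t. posI (A \<union> B) t * indicator {..1} (\<Sum>i\<in>A \<union> B. t i) * \<phi> (\<Sum>i\<in>B. t i)) \<in> borel_measurable (PM (A \<union> B))"
    using AB by (intro borel_measurable_times_ennreal posI_measurable measurable_compose[OF _ phim]) auto
  have "(\<integral>\<^sup>+t. posI (A \<union> B) t * indicator {..1} (\<Sum>i\<in>A \<union> B. t i) * \<phi> (\<Sum>i\<in>B. t i) \<partial>PM (A \<union> B)) =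
    (\<integral>\<^sup>+x. \<integral>\<^sup>+y. posI (A \<union> B) (merge A B (x, y)) * indicator {..1} (\<Sum>i\<in>A \<union> B. merge A B (x, y) i) *
         \<phi> (\<Sum>i\<in>B. merge A B (x, y) i) \<partial>PM B \<partial>PM A)"
    by (rule product_nn_integral_fold[OF AB(1-3) fm])
  also have "\<dots> = (\<integral>\<^sup>+x. posI A x * \<Psi> (\<Sum>i\<in>A. x i) \<partial>PM A)"
  proof (rule nn_integral_cong)
    fix x :: "nat \<Rightarrow> real"
    define h where "h = (\<lambda>u. posI A x * (indicator {..1} ((\<Sum>i\<in>A. x i) + u) * \<phi> u))"
    have hm: "h \<in> borel_measurable borel" unfolding h_def by measurable
    have "(\<integral>\<^sup>+y. posI (A \<union> B) (merge A B (x, y)) * indicator {..1} (\<Sum>i\<in>A \<union> B. merge A B (x, y) i) *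
         \<phi> (\<Sum>i\<in>B. merge A B (x, y) i) \<partial>PM B) = (\<integral>\<^sup>+y. posI B y * h (\<Sum>i\<in>B. y i) \<partial>PM B)"
      by (simp only: posI_merge[OF AB(1-3)] sum_merge[OF AB(1-3)] sum_merge_B[OF AB(1)] h_def mult_ac)
    also have "\<dots> = (\<integral>\<^sup>+u. indicator {0..} u * h u * wm u \<partial>lborel)"
      using D1[OF AB(3) hm] AB(4) by (simp add: wm_def m_def)
    also have "\<dots> = (\<integral>\<^sup>+u. posI A x * (indicator {0..} u * (indicator {..1} ((\<Sum>i\<in>A. x i) + u) * \<phi> u) * wm u) \<partial>lborel)"
      by (simp add: h_def mult_ac)
    also have "\<dots> = posI A x * \<Psi> (\<Sum>i\<in>A. x i)"
      unfolding \<Psi>_def by (rule nn_integral_cmult) measurable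
    finally show "(\<integral>\<^sup>+y. posI (A \<union> B) (merge A B (x, y)) * indicator {..1} (\<Sum>i\<in>A \<union> B. merge A B (x, y) i) *
         \<phi> (\<Sum>i\<in>B. merge A B (x, y) i) \<partial>PM B) = posI A x * \<Psi> (\<Sum>i\<in>A. x i)" .
  qed
  also have "\<dots> = (if A = {} then \<Psi> 0 else \<integral>\<^sup>+w. indicator {0..} w * \<Psi> w * ennreal (w ^ (k - 1) / fact (k - 1)) \<partial>lborel)"
    using D1[OF AB(2) Psim] by (simp add: k_def)
  also have "\<dots> = (\<integral>\<^sup>+u. indicator {0..1} u * \<phi> u * wm u * ennreal ((1 - u) ^ k / fact k) \<partial>lborel)"
  proof (cases "A = {}")
    case True
    then have "k = 0" by (simp add: k_def)
    have "\<Psi> 0 = (\<integral>\<^sup>+u. indicator {0..1} u * \<phi> u * wm u * ennreal ((1 - u) ^ k / fact k) \<partial>lborel)"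
      unfolding \<Psi>_def using \<open>k = 0\<close> by (intro nn_integral_cong) (auto simp: indicator_def)
    then show ?thesis using True by simp
  next
    case False
    then have k1: "k \<ge> 1" using AB(2) by (simp add: k_def Suc_le_eq card_gt_0_iff)
    define wk where "wk = (\<lambda>w::real. ennreal (w ^ (k - 1) / fact (k - 1)))"
    have wkm[measurable]: "wk \<in> borel_measurable borel" unfolding wk_def by measurable
    have "(\<integral>\<^sup>+w. indicator {0..} w * \<Psi> w * wk w \<partial>lborel) =
          (\<integral>\<^sup>+w. \<integral>\<^sup>+u. (indicator {0..} w * wk w) * (indicator {0..} u * (indicator {..1} (w + u) * \<phi> u) * wm u) \<partial>lborel \<partial>lborel)"
      unfolding \<Psi>_def
      by (intro nn_integral_cong) (subst nn_integral_cmult, measurable, simp add: mult_ac)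
    also have "\<dots> = (\<integral>\<^sup>+u. \<integral>\<^sup>+w. (indicator {0..} w * wk w) * (indicator {0..} u * (indicator {..1} (w + u) * \<phi> u) * wm u) \<partial>lborel \<partial>lborel)"
    proof (rule lborel_pair.Fubini'[symmetric])
      have [measurable]: "\<phi> \<in> borel_measurable lborel" "wm \<in> borel_measurable lborel" "wk \<in> borel_measurable lborel"
        by simp_all
      show "(\<lambda>(w, u). (indicator {0..} w * wk w) * (indicator {0..} u * (indicator {..1} (w + u) * \<phi> u) * wm u)) \<in> borel_measurable (lborel \<Otimes>\<^sub>M lborel)"
        by measurable
    qed
    also have "\<dots> = (\<integral>\<^sup>+u. (indicator {0..} u * \<phi> u * wm u) * (\<integral>\<^sup>+w. indicator {0..1 - u} w * wk w \<partial>lborel) \<partial>lborel)"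
    proof (rule nn_integral_cong)
      fix u :: real
      have "(\<integral>\<^sup>+w. (indicator {0..} w * wk w) * (indicator {0..} u * (indicator {..1} (w + u) * \<phi> u) * wm u) \<partial>lborel) =
            (\<integral>\<^sup>+w. (indicator {0..} u * \<phi> u * wm u) * (indicator {0..1 - u} w * wk w) \<partial>lborel)"
        by (intro nn_integral_cong) (auto simp: indicator_def mult_ac)
      also have "\<dots> = (indicator {0..} u * \<phi> u * wm u) * (\<integral>\<^sup>+w. indicator {0..1 - u} w * wk w \<partial>lborel)"
        by (rule nn_integral_cmult) measurable
      finally show "(\<integral>\<^sup>+w. (indicator {0..} w * wk w) * (indicator {0..} u * (indicator {..1} (w + u) * \<phi> u) * wm u) \<partial>lborel) =
            (indicator {0..} u * \<phi> u * wm u) * (\<integral>\<^sup>+w. indicator {0..1 - u} w * wk w \<partial>lborel)" .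
    qed
    also have "\<dots> = (\<integral>\<^sup>+u. indicator {0..1} u * \<phi> u * wm u * ennreal ((1 - u) ^ k / fact k) \<partial>lborel)"
    proof (rule nn_integral_cong)
      fix u :: real
      show "(indicator {0..} u * \<phi> u * wm u) * (\<integral>\<^sup>+w. indicator {0..1 - u} w * wk w \<partial>lborel) =
            indicator {0..1} u * \<phi> u * wm u * ennreal ((1 - u) ^ k / fact k)"
      proof (cases "u \<le> 1")
        case True
        have "(\<integral>\<^sup>+w. indicator {0..1 - u} w * wk w \<partial>lborel) = ennreal ((1 - u) ^ Suc (k - 1) / fact (Suc (k - 1)))"
          unfolding wk_def by (rule powint_nn) (use True in simp)
        then show ?thesis using True k1 by (simp add: indicator_def)
      next
        case False
        then have "\<And>w. indicator {0..1 - u} w * wk w = 0" by (auto simp: indicator_def)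
        then show ?thesis using False by (simp add: indicator_def)
      qed
    qed
    finally show ?thesis using False by (simp add: wk_def)
  qed
  finally show ?thesis by (simp add: wm_def m_def k_def)
qed


definition clamp01 :: "real \<Rightarrow> real" where "clamp01 u = max 0 (min 1 u)"

lemma clamp01_in: "clamp01 u \<in> {0..1}" by (simp add: clamp01_def)
lemma clamp01_id: "u \<in> {0..1} \<Longrightarrow> clamp01 u = u" by (simp add: clamp01_def)
lemma continuous_clamp01: "continuous_on UNIV clamp01"
  unfolding clamp01_def by (intro continuous_intros)

lemma space_PM: "space (PM I) = extensional I"
  by (simp add: space_PiM PiE_def)

lemma simplex_sets: "simplex_std N \<in> sets (PM {..<N})"
proof -
  have "simplex_std N = {t \<in> space (PM {..<N}). (\<forall>j\<in>{..<N}. 0 \<le> t j) \<and> (\<Sum>j<N. t j) \<le> 1}"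
    by (auto simp: simplex_std_def space_PM)
  also have "\<dots> \<in> sets (PM {..<N})" by measurable
  finally show ?thesis .
qed

lemma D3:
  fixes \<phi> :: "real \<Rightarrow> real" and k m N :: nat
  assumes N: "N = k + m" "m \<ge> 1"
    and cont: "continuous_on {0..1} \<phi>" and nonneg: "\<And>u. u \<in> {0..1} \<Longrightarrow> \<phi> u \<ge> 0"
  shows "(\<integral>t\<in>simplex_std N. \<phi> (\<Sum>j\<in>{k..<N}. t j) \<partial>PM {..<N}) =
     integral {0..1} (\<lambda>u. \<phi> u * (u ^ (m - 1) / fact (m - 1) * ((1 - u) ^ k / fact k)))"
proof -
  define A where "A = {..<k}"
  define B where "B = {k..<N}"
  have AB: "A \<inter> B = {}" "finite A" "finite B" "B \<noteq> {}" "A \<union> B = {..<N}" "card A = k" "card B = m"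
    using N by (auto simp: A_def B_def)
  define \<psi> where "\<psi> = (\<lambda>u. \<phi> (clamp01 u))"
  have psic: "continuous_on UNIV \<psi>" unfolding \<psi>_def
    by (rule continuous_on_compose2[OF cont continuous_clamp01]) (auto simp: clamp01_def)
  have psim[measurable]: "\<psi> \<in> borel_measurable borel"
    using psic by (rule borel_measurable_continuous_onI)
  have psi_nn: "\<psi> u \<ge> 0" for u unfolding \<psi>_def by (rule nonneg[OF clamp01_in])
  have psi_eq: "u \<in> {0..1} \<Longrightarrow> \<psi> u = \<phi> u" for u by (simp add: \<psi>_def clamp01_id)
  define w where "w = (\<lambda>u::real. u ^ (m - 1) / fact (m - 1) * ((1 - u) ^ k / fact k))"
  have wc: "continuous_on {0..1} w" unfolding w_def by (intro continuous_intros) auto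
  have w_nn: "u \<in> {0..1} \<Longrightarrow> w u \<ge> 0" for u unfolding w_def by auto
  have sB: "t \<in> simplex_std N \<Longrightarrow> (\<Sum>j\<in>B. t j) \<in> {0..1}" for t
  proof -
    assume t: "t \<in> simplex_std N"
    have nn: "\<And>j. j < N \<Longrightarrow> 0 \<le> t j" using t by (auto simp: simplex_std_def)
    have "(\<Sum>j\<in>B. t j) \<ge> 0" using nn by (intro sum_nonneg) (auto simp: B_def)
    moreover have "(\<Sum>j\<in>B. t j) \<le> (\<Sum>j<N. t j)"
      using nn by (intro sum_mono2) (auto simp: B_def)
    moreover have "(\<Sum>j<N. t j) \<le> 1" using t by (auto simp: simplex_std_def)
    ultimately show ?thesis by auto
  qed
  have "(\<integral>t\<in>simplex_std N. \<phi> (\<Sum>j\<in>{k..<N}. t j) \<partial>PM {..<N}) = (\<integral>t\<in>simplex_std N. \<psi> (\<Sum>j\<in>B. t j) \<partial>PM {..<N})"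
    by (rule set_lebesgue_integral_cong) (use sB psi_eq simplex_sets in \<open>auto simp: B_def\<close>)
  also have "\<dots> = (\<integral>t. indicator (simplex_std N) t * \<psi> (\<Sum>j\<in>B. t j) \<partial>PM {..<N})"
    by (simp add: set_lebesgue_integral_def)
  also have "\<dots> = enn2real (\<integral>\<^sup>+t. ennreal (indicator (simplex_std N) t * \<psi> (\<Sum>j\<in>B. t j)) \<partial>PM {..<N})"
  proof (rule integral_eq_nn_integral)
    show "(\<lambda>t. indicator (simplex_std N) t * \<psi> (\<Sum>j\<in>B. t j)) \<in> borel_measurable (PM {..<N})"
      using simplex_sets[of N] AB by measurable (auto simp: B_def)
    show "AE t in PM {..<N}. 0 \<le> indicator (simplex_std N) t * \<psi> (\<Sum>j\<in>B. t j)"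
      using psi_nn by simp
  qed
  also have "(\<integral>\<^sup>+t. ennreal (indicator (simplex_std N) t * \<psi> (\<Sum>j\<in>B. t j)) \<partial>PM {..<N}) =
       (\<integral>\<^sup>+t. posI (A \<union> B) t * indicator {..1} (\<Sum>i\<in>A \<union> B. t i) * ennreal (\<psi> (\<Sum>i\<in>B. t i)) \<partial>PM (A \<union> B))"
  proof -
    have "(\<integral>\<^sup>+t. ennreal (indicator (simplex_std N) t * \<psi> (\<Sum>j\<in>B. t j)) \<partial>PM {..<N}) =
       (\<integral>\<^sup>+t. posI {..<N} t * indicator {..1} (\<Sum>i\<in>{..<N}. t i) * ennreal (\<psi> (\<Sum>i\<in>B. t i)) \<partial>PM {..<N})"
    proof (rule nn_integral_cong)
      fix t assume "t \<in> space (PM {..<N})"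
      then have te: "t \<in> extensional {..<N}" by (simp add: space_PM)
      have "posI {..<N} t = (if \<forall>j<N. 0 \<le> t j then 1 else 0)"
        unfolding posI_def by (induction N) (auto simp: indicator_def less_Suc_eq)
      then show "ennreal (indicator (simplex_std N) t * \<psi> (\<Sum>j\<in>B. t j)) =
          posI {..<N} t * indicator {..1} (\<Sum>i\<in>{..<N}. t i) * ennreal (\<psi> (\<Sum>i\<in>B. t i))"
        using te by (auto simp: simplex_std_def indicator_def)
    qed
    then show ?thesis using AB by simp
  qed
  also have "\<dots> = (\<integral>\<^sup>+u. indicator {0..1} u * ennreal (\<psi> u) * ennreal (u ^ (card B - 1) / fact (card B - 1)) *
        ennreal ((1 - u) ^ card A / fact (card A)) \<partial>lborel)"
    by (rule D2[OF AB(1-4)]) measurable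
  also have "\<dots> = (\<integral>\<^sup>+u. ennreal (indicator {0..1} u * (\<phi> u * w u)) \<partial>lborel)"
  proof (rule nn_integral_cong)
    fix u :: real
    show "indicator {0..1} u * ennreal (\<psi> u) * ennreal (u ^ (card B - 1) / fact (card B - 1)) *
        ennreal ((1 - u) ^ card A / fact (card A)) = ennreal (indicator {0..1} u * (\<phi> u * w u))"
    proof (cases "u \<in> {0..1}")
      case True
      define X where "X = u ^ (m - 1) / fact (m - 1)"
      define Y where "Y = (1 - u) ^ k / fact k"
      have XY: "X \<ge> 0" "Y \<ge> 0" using True by (auto simp: X_def Y_def)
      have "ennreal (\<phi> u * (X * Y)) = ennreal (\<phi> u) * (ennreal X * ennreal Y)"
        using XY nonneg[OF True] by (simp add: ennreal_mult)
      then show ?thesis using AB psi_eq[OF True] True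
        by (simp add: w_def X_def Y_def mult_ac)
    qed simp
  qed
  also have "\<dots> = ennreal (integral {0..1} (\<lambda>u. \<phi> u * w u))"
  proof (rule nn_integral_has_integral_lebesgue)
    show "((\<lambda>u. \<phi> u * w u) has_integral integral {0..1} (\<lambda>u. \<phi> u * w u)) {0..1}"
      using cont wc by (intro integrable_integral integrable_continuous_interval continuous_on_mult)
  qed (use nonneg w_nn in auto)
  also have "enn2real (ennreal (integral {0..1} (\<lambda>u. \<phi> u * w u))) = integral {0..1} (\<lambda>u. \<phi> u * w u)"
    using nonneg w_nn by (intro enn2real_ennreal integral_nonneg) (auto intro: integrable_continuous_interval continuous_on_mult cont wc)
  finally show ?thesis by (simp add: w_def)
qed


lemma alg_inv_pow:
  fixes c y :: real assumes "y \<noteq> 0"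
  shows "(0 * y ^ Suc n - c * (real (Suc n) * y ^ (Suc n - Suc 0) * 1)) / (y ^ Suc n * y ^ Suc n)
     = - c * real (Suc n) / y ^ Suc (Suc n)"
proof -
  have "y ^ Suc n * y ^ Suc n = y ^ n * y ^ Suc (Suc n)" by (simp add: power_add[symmetric])
  then show ?thesis using assms by (simp add: field_simps)
qed

lemma higher_deriv_ln:
  assumes "(y::real) > 0"
  shows "(deriv ^^ Suc n) ln y = (-1) ^ n * fact n / y ^ Suc n"
  using assms
proof (induction n arbitrary: y)
  case 0
  have "deriv ln y = 1 / y" using DERIV_ln_divide[OF 0] by (rule DERIV_imp_deriv)
  then show ?case by simp
next
  case (Suc n)
  have d: "((\<lambda>y. (-1) ^ n * fact n / y ^ Suc n) has_real_derivative (-1) ^ Suc n * fact (Suc n) / y ^ Suc (Suc n)) (at y)"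
    apply (rule derivative_eq_intros refl)+
    using Suc.prems apply simp
    using alg_inv_pow[where y=y and c="(-1) ^ n * fact n" and n=n] Suc.prems by (simp add: field_simps)
  have "((deriv ^^ Suc n) ln has_real_derivative (-1) ^ Suc n * fact (Suc n) / y ^ Suc (Suc n)) (at y)"
    by (rule has_field_derivative_transform_within_open[OF d, of "{0<..}"]) (use Suc in auto)
  then show ?case by (simp add: DERIV_imp_deriv del: funpow.simps) (simp add: DERIV_imp_deriv)
qed


lemma sum_split:
  fixes f :: "nat \<Rightarrow> real"
  assumes "k \<le> N"
  shows "(\<Sum>j<N. f j) = (\<Sum>j<k. f j) + (\<Sum>j\<in>{k..<N}. f j)"
proof -
  have eq: "{..<N} = {..<k} \<union> {k..<N}" using assms by auto
  show ?thesis by (subst eq, rule sum.union_disjoint) auto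
qed

lemma point_formula:
  fixes t :: "nat \<Rightarrow> real"
  assumes "k \<le> N" "\<And>j. j < N \<Longrightarrow> c j = (if j < k then 1 else s)"
  shows "(1 - (\<Sum>j<N. t j)) * 1 + (\<Sum>j<N. t j * c j) = 1 + (s - 1) * (\<Sum>j\<in>{k..<N}. t j)"
proof -
  have "(\<Sum>j<N. t j * c j) = (\<Sum>j<k. t j * c j) + (\<Sum>j\<in>{k..<N}. t j * c j)"
    by (rule sum_split[OF assms(1)])
  also have "(\<Sum>j<k. t j * c j) = (\<Sum>j<k. t j)"
    using assms by (intro sum.cong) auto
  also have "(\<Sum>j\<in>{k..<N}. t j * c j) = s * (\<Sum>j\<in>{k..<N}. t j)"
    using assms by (simp add: sum_distrib_left mult.commute)
  finally have "(\<Sum>j<N. t j * c j) = (\<Sum>j<k. t j) + s * (\<Sum>j\<in>{k..<N}. t j)" .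
  moreover have "(\<Sum>j<N. t j) = (\<Sum>j<k. t j) + (\<Sum>j\<in>{k..<N}. t j)"
    by (rule sum_split[OF assms(1)])
  ultimately show ?thesis by (simp add: algebra_simps)
qed

lemma sum_B_in:
  assumes t: "t \<in> simplex_std N" and "k \<le> N"
  shows "(\<Sum>j\<in>{k..<N}. t j) \<in> {0..1}"
proof -
  have nn: "\<And>j. j < N \<Longrightarrow> 0 \<le> t j" using t by (auto simp: simplex_std_def)
  have "(\<Sum>j\<in>{k..<N}. t j) \<ge> 0" using nn by (intro sum_nonneg) auto
  moreover have "(\<Sum>j\<in>{k..<N}. t j) \<le> (\<Sum>j<N. t j)"
    using nn by (intro sum_mono2) auto
  moreover have "(\<Sum>j<N. t j) \<le> 1" using t by (auto simp: simplex_std_def)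
  ultimately show ?thesis by auto
qed

lemma D3sign:
  fixes \<phi> :: "real \<Rightarrow> real" and k m N :: nat and c :: real
  assumes N: "N = k + m" "m \<ge> 1"
    and cont: "continuous_on {0..1} \<phi>" and nonneg: "\<And>u. u \<in> {0..1} \<Longrightarrow> \<phi> u \<ge> 0"
    and F: "\<And>t. t \<in> simplex_std N \<Longrightarrow> F t = c * \<phi> (\<Sum>j\<in>{k..<N}. t j)"
  shows "(\<integral>t\<in>simplex_std N. F t \<partial>PM {..<N}) =
     c * integral {0..1} (\<lambda>u. \<phi> u * (u ^ (m - 1) / fact (m - 1) * ((1 - u) ^ k / fact k)))"
proof -
  have "(\<integral>t\<in>simplex_std N. F t \<partial>PM {..<N}) = (\<integral>t\<in>simplex_std N. c * \<phi> (\<Sum>j\<in>{k..<N}. t j) \<partial>PM {..<N})"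
    by (rule set_lebesgue_integral_cong) (use F simplex_sets in auto)
  also have "\<dots> = c * (\<integral>t\<in>simplex_std N. \<phi> (\<Sum>j\<in>{k..<N}. t j) \<partial>PM {..<N})"
    by simp
  also have "\<dots> = c * integral {0..1} (\<lambda>u. \<phi> u * (u ^ (m - 1) / fact (m - 1) * ((1 - u) ^ k / fact k)))"
    by (simp only: D3[OF N cont nonneg])
  finally show ?thesis .
qed

lemma claim3:
  fixes s :: real
  assumes s: "s > 0"
  shows "frakH a0 a1 s 0 = (-1) ^ (a0 + a1) * divdiff_1s (a0 + 1) s (a1 + 1) ln"
proof -
  define n where "n = a0 + a1"
  define N where "N = a0 + a1 + 1"
  define ys where "ys = replicate (a0 + 1) 1 @ replicate (a1 + 1) s"
  define \<psi> where "\<psi> = (\<lambda>u::real. fact n / (1 + u * (s - 1)) ^ (n + 1))"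
  have len: "length ys - 1 = N" by (simp add: ys_def N_def)
  have y0: "ys ! 0 = 1" by (simp add: ys_def nth_append)
  have yj: "\<And>j. j < N \<Longrightarrow> ys ! (j + 1) = (if j < a0 then 1 else s)"
    by (auto simp: ys_def nth_append N_def nth_Cons')
  have Wp: "\<And>u. u \<in> {0..1} \<Longrightarrow> 1 + u * (s - 1) > 0" using w_pos[OF s] by auto
  have psic: "continuous_on {0..1} \<psi>" unfolding \<psi>_def
    by (intro continuous_intros) (use Wp in fastforce)
  have psinn: "\<And>u. u \<in> {0..1} \<Longrightarrow> \<psi> u \<ge> 0" unfolding \<psi>_def
    using Wp by (intro divide_nonneg_nonneg) (auto intro!: zero_le_power less_imp_le)
  have F: "(deriv ^^ N) ln ((1 - (\<Sum>j<N. t j)) * ys ! 0 + (\<Sum>j<N. t j * ys ! (j + 1))) =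
           (-1) ^ n * \<psi> (\<Sum>j\<in>{a0..<N}. t j)" if t: "t \<in> simplex_std N" for t
  proof -
    have pt: "(1 - (\<Sum>j<N. t j)) * ys ! 0 + (\<Sum>j<N. t j * ys ! (j + 1)) = 1 + (\<Sum>j\<in>{a0..<N}. t j) * (s - 1)"
      unfolding y0 using point_formula[of a0 N "\<lambda>j. ys ! (j + 1)" s t] yj by (simp add: N_def mult.commute)
    have pos: "1 + (\<Sum>j\<in>{a0..<N}. t j) * (s - 1) > 0"
      using Wp[OF sum_B_in[OF t, of a0]] by (simp add: N_def)
    have "N = Suc n" by (simp add: N_def n_def)
    then show ?thesis unfolding pt using higher_deriv_ln[OF pos, of n] by (simp add: \<psi>_def)
  qed
  have "divdiff_1s (a0 + 1) s (a1 + 1) ln =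
      (\<integral>t\<in>simplex_std N. (deriv ^^ N) ln ((1 - (\<Sum>j<N. t j)) * ys ! 0 + (\<Sum>j<N. t j * ys ! (j + 1))) \<partial>PM {..<N})"
    unfolding divdiff_1s_def divdiff_def Let_def ys_def[symmetric] len ..
  also have "\<dots> = (-1) ^ n * integral {0..1} (\<lambda>u. \<psi> u * (u ^ (a1 + 1 - 1) / fact (a1 + 1 - 1) * ((1 - u) ^ a0 / fact a0)))"
    by (rule D3sign[of N a0 "a1 + 1"]) (use F psic psinn in \<open>auto simp: N_def\<close>)
  also have "integral {0..1} (\<lambda>u. \<psi> u * (u ^ (a1 + 1 - 1) / fact (a1 + 1 - 1) * ((1 - u) ^ a0 / fact a0)))
      = fact n / (fact a0 * fact a1) * J (n + 1) a1 a0 s"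
  proof -
    have "integral {0..1} (\<lambda>u. \<psi> u * (u ^ (a1 + 1 - 1) / fact (a1 + 1 - 1) * ((1 - u) ^ a0 / fact a0)))
        = integral {0..1} (\<lambda>u. fact n / (fact a0 * fact a1) * (u ^ a1 * (1 - u) ^ a0 / (1 + u * (s - 1)) ^ (n + 1)))"
      by (rule integral_cong) (simp add: \<psi>_def field_simps)
    also have "\<dots> = fact n / (fact a0 * fact a1) * J (n + 1) a1 a0 s"
      by (simp only: integral_mult_left_real J_def)
    finally show ?thesis .
  qed
  finally have "divdiff_1s (a0 + 1) s (a1 + 1) ln = (-1) ^ n * (fact n / (fact a0 * fact a1) * J (n + 1) a1 a0 s)" .
  moreover have "frakH a0 a1 s 0 = fact n / (fact a0 * fact a1) * J (n + 1) a1 a0 s"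
    using H0_J[OF s] by (simp add: n_def)
  moreover have "(-1::real) ^ n * (-1) ^ n = 1" by (simp flip: power_add)
  ultimately show ?thesis by (simp add: n_def flip: mult.assoc)
qed


lemma alg7:
  fixes W t c :: real
  assumes W: "W \<noteq> 0" "W = 1 + t * c"
  shows "(real (Suc n) * t ^ n * W ^ Suc n - t ^ Suc n * (real (Suc n) * W ^ n * c)) / (W ^ Suc n * W ^ Suc n)
     = real (Suc n) * t ^ n / W ^ Suc (Suc n)"
proof -
  have "real (Suc n) * t ^ n * W ^ Suc n - t ^ Suc n * (real (Suc n) * W ^ n * c)
        = real (Suc n) * t ^ n * W ^ n * (W - t * c)" by (simp add: algebra_simps)
  also have "W - t * c = 1" using W by simp
  finally have num: "real (Suc n) * t ^ n * W ^ Suc n - t ^ Suc n * (real (Suc n) * W ^ n * c) = real (Suc n) * t ^ n * W ^ n"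
    by simp
  have den: "W ^ Suc n * W ^ Suc n = W ^ n * W ^ Suc (Suc n)" by (simp add: power_add[symmetric])
  show ?thesis unfolding num den using W by simp
qed

lemma deriv_frac:
  fixes t c :: real
  assumes W: "1 + t * c \<noteq> 0"
  shows "((\<lambda>t. t ^ Suc n / (1 + t * c) ^ Suc n) has_real_derivative real (Suc n) * t ^ n / (1 + t * c) ^ Suc (Suc n)) (at t within S)"
  apply (rule derivative_eq_intros refl)+
  using W apply simp
  using alg7[OF W refl, of n] by (simp add: mult_ac)

lemma J_n2:
  fixes y :: real assumes y: "y > 0"
  shows "J (n + 2) n 0 y = 1 / (real (n + 1) * y ^ (n + 1))"
proof -
  have Wp: "\<And>t. t \<in> {0..1} \<Longrightarrow> 1 + t * (y - 1) > 0" using w_pos[OF y] by auto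
  have "((\<lambda>t. t ^ n / (1 + t * (y - 1)) ^ Suc (Suc n)) has_integral
        (1 ^ Suc n / (1 + 1 * (y - 1)) ^ Suc n / real (Suc n) - 0 ^ Suc n / (1 + 0 * (y - 1)) ^ Suc n / real (Suc n))) {0..1}"
  proof (rule fundamental_theorem_of_calculus)
    fix t :: real assume t: "t \<in> {0..1}"
    have W: "1 + t * (y - 1) \<noteq> 0" using Wp[OF t] by simp
    have "((\<lambda>t. t ^ Suc n / (1 + t * (y - 1)) ^ Suc n / real (Suc n)) has_real_derivative
       real (Suc n) * t ^ n / (1 + t * (y - 1)) ^ Suc (Suc n) / real (Suc n)) (at t within {0..1})"
      by (rule DERIV_cdivide[OF deriv_frac[OF W]])
    then show "((\<lambda>t. t ^ Suc n / (1 + t * (y - 1)) ^ Suc n / real (Suc n)) has_vector_derivative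
       t ^ n / (1 + t * (y - 1)) ^ Suc (Suc n)) (at t within {0..1})"
      by (simp add: has_real_derivative_iff_has_vector_derivative)
  qed simp
  then have "integral {0..1} (\<lambda>t. t ^ n / (1 + t * (y - 1)) ^ Suc (Suc n)) = 1 / (real (n + 1) * y ^ (n + 1))"
    by (simp add: integral_unique)
  then show ?thesis unfolding J_def by simp
qed

lemma J_split:
  fixes y :: real assumes y: "y > 0"
  shows "J b (E + 1) F y + J b E (F + 1) y = J b E F y"
proof -
  have "J b (E + 1) F y + J b E (F + 1) y =
     integral {0..1} (\<lambda>t. t ^ (E + 1) * (1 - t) ^ F / (1 + t * (y - 1)) ^ b + t ^ E * (1 - t) ^ (F + 1) / (1 + t * (y - 1)) ^ b)"
    unfolding J_def by (rule integral_add[symmetric]; rule J_integrable[OF y])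
  also have "\<dots> = J b E F y"
    unfolding J_def
  proof (rule integral_cong)
    fix t :: real
    have e: "t ^ (E + 1) * (1 - t) ^ F + t ^ E * (1 - t) ^ (F + 1) = t ^ E * (1 - t) ^ F"
      by (simp add: algebra_simps)
    show "t ^ (E + 1) * (1 - t) ^ F / (1 + t * (y - 1)) ^ b + t ^ E * (1 - t) ^ (F + 1) / (1 + t * (y - 1)) ^ b =
          t ^ E * (1 - t) ^ F / (1 + t * (y - 1)) ^ b"
      by (metis e add_divide_distrib)
  qed
  finally show ?thesis .
qed

lemma J_rel:
  fixes y :: real assumes y: "y > 0"
  shows "(y - 1) * J (n + 2) (n + 1) 0 y = J (n + 1) n 0 y - 1 / (real (n + 1) * y ^ (n + 1))"
proof -
  have r1: "J (n + 1) n 0 y - y * J (n + 2) (n + 1) 0 y = J (n + 2) n 1 y"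
    using J_rec[OF y, of n n 0] by simp
  have r2: "J (n + 2) (n + 1) 0 y + J (n + 2) n 1 y = J (n + 2) n 0 y"
    using J_split[OF y, of "n + 2" n 0] by simp
  show ?thesis using r1 r2 J_n2[OF y, of n] by (simp add: algebra_simps)
qed


lemma IBP:
  fixes s :: real and k a1 n :: nat
  assumes s: "s > 0" and n: "n = Suc k + a1"
  shows "integral {0..1} (\<lambda>u. J (n + 1) n 0 (1 + u * (s - 1)) * (u ^ a1 * (1 - u) ^ k)) = J (n + 1) a1 (Suc k) s / real (Suc k)"
proof -
  define y where "y = (\<lambda>u::real. 1 + u * (s - 1))"
  define Q where "Q = (\<lambda>u. J (n + 1) n 0 (y u))"
  define J2 where "J2 = (\<lambda>u. J (n + 2) (n + 1) 0 (y u))"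
  define P where "P = (\<lambda>u::real. (1 - u) ^ Suc k * u ^ (a1 + 1) * Q u)"
  define P' where "P' = (\<lambda>u::real. - real (Suc k) * ((1 - u) ^ k * u ^ a1 * Q u) + (1 - u) ^ Suc k * u ^ a1 / (y u) ^ (n + 1))"
  have ypos: "\<And>u. u \<in> {0..1} \<Longrightarrow> y u > 0" unfolding y_def using w_pos[OF s] by auto
  have dy: "\<And>u. ((\<lambda>u. 1 + u * (s - 1)) has_real_derivative (s - 1)) (at u)"
    by (rule derivative_eq_intros refl)+ simp
  have dQ: "(Q has_real_derivative (- real (n + 1) * J2 u) * (s - 1)) (at u)" if u: "u \<in> {0..1}" for u
  proof -
    have "(J (n + 1) n 0 has_real_derivative - real (n + 1) * J (n + 1 + 1) (n + 1) 0 (y u)) (at (y u))"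
      by (rule J_deriv[OF ypos[OF u]])
    from DERIV_chain2[OF this[unfolded y_def] dy]
    show ?thesis by (simp add: Q_def J2_def y_def)
  qed
  have dP: "(P has_real_derivative P' u) (at u within {0..1})" if u: "u \<in> {0..1}" for u
  proof -
    have d1: "((\<lambda>u::real. (1 - u) ^ Suc k) has_real_derivative - real (Suc k) * (1 - u) ^ k) (at u)"
      by (rule derivative_eq_intros refl)+ (simp add: algebra_simps)
    have d2: "((\<lambda>u::real. u ^ (a1 + 1)) has_real_derivative real (a1 + 1) * u ^ a1) (at u)"
      by (rule derivative_eq_intros refl)+ simp
    have base: "(P has_real_derivative
       ((- real (Suc k) * (1 - u) ^ k) * u ^ (a1 + 1) + (real (a1 + 1) * u ^ a1) * (1 - u) ^ Suc k) * Q u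
        + ((- real (n + 1) * J2 u) * (s - 1)) * ((1 - u) ^ Suc k * u ^ (a1 + 1))) (at u)"
      unfolding P_def by (intro DERIV_mult d1 d2 dQ u)
    have Y: "y u > 0" using ypos[OF u] .
    have rel: "(u * (s - 1)) * J2 u = Q u - 1 / (real (n + 1) * y u ^ (n + 1))"
      using J_rel[OF Y, of n] by (simp add: Q_def J2_def y_def)
    define A where "A = (1 - u) ^ k"
    define B where "B = u ^ a1"
    define R where "R = 1 / y u ^ (n + 1)"
    have rel': "(u * (s - 1)) * J2 u = Q u - R / real (n + 1)" using rel by (simp add: R_def)
    have "((- real (Suc k) * (1 - u) ^ k) * u ^ (a1 + 1) + (real (a1 + 1) * u ^ a1) * (1 - u) ^ Suc k) * Q u
        + ((- real (n + 1) * J2 u) * (s - 1)) * ((1 - u) ^ Suc k * u ^ (a1 + 1))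
        = A * B * ((- real (Suc k) * u + real (a1 + 1) * (1 - u)) * Q u - real (n + 1) * (1 - u) * ((u * (s - 1)) * J2 u))"
      by (simp add: A_def B_def algebra_simps)
    also have "\<dots> = A * B * ((- real (Suc k) * u + real (a1 + 1) * (1 - u)) * Q u - real (n + 1) * (1 - u) * (Q u - R / real (n + 1)))"
      by (simp only: rel')
    also have "\<dots> = A * B * ((- real (Suc k) * u + real (a1 + 1) * (1 - u) - real (n + 1) * (1 - u)) * Q u + (1 - u) * R)"
    proof -
      have e: "real (n + 1) * (1 - u) * (Q u - R / real (n + 1)) = real (n + 1) * (1 - u) * Q u - (1 - u) * R"
        by (simp add: field_simps)
      show ?thesis unfolding e by (simp add: algebra_simps)
    qed
    also have "- real (Suc k) * u + real (a1 + 1) * (1 - u) - real (n + 1) * (1 - u) = - real (Suc k)"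
      using n by (simp add: algebra_simps)
    also have "A * B * (- real (Suc k) * Q u + (1 - u) * R) = P' u"
      unfolding P'_def A_def B_def R_def by (simp add: algebra_simps)
    finally show ?thesis using has_field_derivative_at_within[OF base] by simp
  qed
  have Qc: "continuous_on {0..1} Q"
    by (rule DERIV_continuous_on[of _ _ "\<lambda>u. (- real (n + 1) * J2 u) * (s - 1)"])
       (use dQ in \<open>auto intro: has_field_derivative_at_within\<close>)
  have yc: "continuous_on {0..1} (\<lambda>u. 1 / y u ^ (n + 1))" unfolding y_def
    by (intro continuous_intros) (use ypos in \<open>fastforce simp: y_def\<close>)
  have int1: "(\<lambda>u. (1 - u) ^ k * u ^ a1 * Q u) integrable_on {0..1}"
    by (intro integrable_continuous_interval continuous_intros Qc)
  have int2: "(\<lambda>u. (1 - u) ^ Suc k * u ^ a1 / y u ^ (n + 1)) integrable_on {0..1}"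
    unfolding y_def by (intro integrable_continuous_interval continuous_intros) (use ypos in \<open>fastforce simp: y_def\<close>)
  have "(P' has_integral (P 1 - P 0)) {0..1}"
    by (rule fundamental_theorem_of_calculus) (auto simp: has_real_derivative_iff_has_vector_derivative[symmetric] intro: dP)
  moreover have "P 1 - P 0 = 0" by (simp add: P_def)
  ultimately have "integral {0..1} P' = 0" by (simp add: integral_unique)
  moreover have "integral {0..1} P' = - real (Suc k) * integral {0..1} (\<lambda>u. (1 - u) ^ k * u ^ a1 * Q u)
        + integral {0..1} (\<lambda>u. (1 - u) ^ Suc k * u ^ a1 / y u ^ (n + 1))"
  proof -
    have i1: "(\<lambda>u. - real (Suc k) * ((1 - u) ^ k * u ^ a1 * Q u)) integrable_on {0..1}"
      by (intro integrable_continuous_interval continuous_intros Qc)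
    have "integral {0..1} P' = integral {0..1} (\<lambda>u. - real (Suc k) * ((1 - u) ^ k * u ^ a1 * Q u))
        + integral {0..1} (\<lambda>u. (1 - u) ^ Suc k * u ^ a1 / y u ^ (n + 1))"
      unfolding P'_def by (rule integral_add[OF i1 int2])
    then show ?thesis by (simp only: integral_mult_left_real)
  qed
  moreover have "integral {0..1} (\<lambda>u. (1 - u) ^ Suc k * u ^ a1 / y u ^ (n + 1)) = J (n + 1) a1 (Suc k) s"
    unfolding J_def y_def by (rule integral_cong) (simp add: mult_ac)
  moreover have "integral {0..1} (\<lambda>u. J (n + 1) n 0 (1 + u * (s - 1)) * (u ^ a1 * (1 - u) ^ k)) =
      integral {0..1} (\<lambda>u. (1 - u) ^ k * u ^ a1 * Q u)"
    unfolding Q_def y_def by (rule integral_cong) (simp add: mult_ac)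
  ultimately show ?thesis by (simp add: field_simps)
qed


lemma pow_hasint:
  assumes "(v::real) \<ge> 0"
  shows "((\<lambda>u::real. u ^ n / fact n) has_integral (v ^ Suc n / fact (Suc n))) {0..v}"
proof -
  have "((\<lambda>u::real. u ^ n / fact n) has_integral (v ^ Suc n / fact (Suc n) - 0 ^ Suc n / fact (Suc n))) {0..v}"
  proof (rule fundamental_theorem_of_calculus)
    fix x :: real assume "x \<in> {0..v}"
    have "((\<lambda>u::real. u ^ Suc n / fact (Suc n)) has_real_derivative (real (Suc n) * x ^ n / fact (Suc n))) (at x within {0..v})"
      using DERIV_cdivide[OF DERIV_pow[of "Suc n" x "{0..v}"], of "fact (Suc n)"] by simp
    moreover have "real (Suc n) * x ^ n / fact (Suc n) = x ^ n / fact n"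
    proof -
      have "fact (Suc n) = real (Suc n) * (fact n :: real)" by (simp only: fact_Suc)
      then show ?thesis by (simp del: of_nat_Suc)
    qed
    ultimately show "((\<lambda>u::real. u ^ Suc n / fact (Suc n)) has_vector_derivative x ^ n / fact n) (at x within {0..v})"
      by (simp add: has_real_derivative_iff_has_vector_derivative)
  qed (use assms in simp)
  then show ?thesis by simp
qed

lemma J_cont: "continuous_on {0<..} (J b e f)"
proof (rule DERIV_continuous_on[of _ _ "\<lambda>s. - real b * J (b+1) (e+1) f s"])
  fix x :: real assume "x \<in> {0<..}"
  then show "(J b e f has_real_derivative - real b * J (b + 1) (e + 1) f x) (at x within {0<..})"
    using J_deriv[of x b e f] by (auto intro: has_field_derivative_at_within)
qed

lemma J_nonneg:
  fixes s :: real assumes s: "s > 0"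
  shows "J b e f s \<ge> 0"
  unfolding J_def
proof (rule integral_nonneg[OF J_integrable[OF s]])
  fix t :: real assume "t \<in> {0..1}"
  then show "0 \<le> t ^ e * (1 - t) ^ f / (1 + t * (s - 1)) ^ b"
    using w_pos[OF s] by (intro divide_nonneg_nonneg) (auto intro!: zero_le_power less_imp_le)
qed

lemma higher_L0:
  fixes y :: real assumes y: "y > 0"
  shows "(deriv ^^ n) L0 y = (-1) ^ n * fact n * J (n + 1) n 0 y"
proof -
  have "(deriv ^^ n) L0 y = (deriv ^^ n) (J 1 0 0) y"
    by (rule higher_deriv_cong_open[of "{0<..}"]) (use y J100 in auto)
  also have "\<dots> = (-1) ^ n * pochhammer (real 1) n * J (1 + n) (0 + n) 0 y"
    by (rule J_higher[OF y])
  finally show ?thesis by (simp add: pochhammer_fact add.commute)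
qed

lemma claim4_Suc:
  fixes s :: real
  assumes s: "s > 0"
  shows "frakH (Suc k) a1 s 0 = (-1) ^ (Suc k + a1) * divdiff_1s (Suc k) s (a1 + 1) L0"
proof -
  define n where "n = Suc k + a1"
  define N where "N = Suc k + a1"
  define ys where "ys = replicate (Suc k) 1 @ replicate (a1 + 1) s"
  define \<psi> where "\<psi> = (\<lambda>u::real. fact n * J (n + 1) n 0 (1 + u * (s - 1)))"
  have len: "length ys - 1 = N" by (simp add: ys_def N_def)
  have y0: "ys ! 0 = 1" by (simp add: ys_def nth_append)
  have yj: "\<And>j. j < N \<Longrightarrow> ys ! (j + 1) = (if j < k then 1 else s)"
    by (auto simp: ys_def nth_append N_def nth_Cons')
  have Wp: "\<And>u. u \<in> {0..1} \<Longrightarrow> 1 + u * (s - 1) > 0" using w_pos[OF s] by auto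
  have psic: "continuous_on {0..1} \<psi>" unfolding \<psi>_def
    by (intro continuous_intros continuous_on_compose2[OF J_cont]) (use Wp in auto)
  have psinn: "\<And>u. u \<in> {0..1} \<Longrightarrow> \<psi> u \<ge> 0" unfolding \<psi>_def
    using Wp J_nonneg by auto
  have F: "(deriv ^^ N) L0 ((1 - (\<Sum>j<N. t j)) * ys ! 0 + (\<Sum>j<N. t j * ys ! (j + 1))) =
           (-1) ^ n * \<psi> (\<Sum>j\<in>{k..<N}. t j)" if t: "t \<in> simplex_std N" for t
  proof -
    have pt: "(1 - (\<Sum>j<N. t j)) * ys ! 0 + (\<Sum>j<N. t j * ys ! (j + 1)) = 1 + (\<Sum>j\<in>{k..<N}. t j) * (s - 1)"
      unfolding y0 using point_formula[of k N "\<lambda>j. ys ! (j + 1)" s t] yj by (simp add: N_def mult.commute)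
    have pos: "1 + (\<Sum>j\<in>{k..<N}. t j) * (s - 1) > 0"
      using Wp[OF sum_B_in[OF t, of k]] by (simp add: N_def)
    show ?thesis unfolding pt using higher_L0[OF pos, of N] by (simp add: \<psi>_def N_def n_def)
  qed
  have "divdiff_1s (Suc k) s (a1 + 1) L0 =
      (\<integral>t\<in>simplex_std N. (deriv ^^ N) L0 ((1 - (\<Sum>j<N. t j)) * ys ! 0 + (\<Sum>j<N. t j * ys ! (j + 1))) \<partial>PM {..<N})"
    unfolding divdiff_1s_def divdiff_def Let_def ys_def[symmetric] len ..
  also have "\<dots> = (-1) ^ n * integral {0..1} (\<lambda>u. \<psi> u * (u ^ (a1 + 1 - 1) / fact (a1 + 1 - 1) * ((1 - u) ^ k / fact k)))"
    by (rule D3sign[of N k "a1 + 1"]) (use F psic psinn in \<open>auto simp: N_def\<close>)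
  also have "integral {0..1} (\<lambda>u. \<psi> u * (u ^ (a1 + 1 - 1) / fact (a1 + 1 - 1) * ((1 - u) ^ k / fact k)))
      = fact n / (fact a1 * fact k) * integral {0..1} (\<lambda>u. J (n + 1) n 0 (1 + u * (s - 1)) * (u ^ a1 * (1 - u) ^ k))"
  proof -
    have "integral {0..1} (\<lambda>u. \<psi> u * (u ^ (a1 + 1 - 1) / fact (a1 + 1 - 1) * ((1 - u) ^ k / fact k)))
        = integral {0..1} (\<lambda>u. fact n / (fact a1 * fact k) * (J (n + 1) n 0 (1 + u * (s - 1)) * (u ^ a1 * (1 - u) ^ k)))"
      by (rule integral_cong) (simp add: \<psi>_def field_simps)
    then show ?thesis by (simp only: integral_mult_left_real)
  qed
  also have "integral {0..1} (\<lambda>u. J (n + 1) n 0 (1 + u * (s - 1)) * (u ^ a1 * (1 - u) ^ k)) = J (n + 1) a1 (Suc k) s / real (Suc k)"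
    by (rule IBP[OF s]) (simp add: n_def)
  finally have dd: "divdiff_1s (Suc k) s (a1 + 1) L0 = (-1) ^ n * (fact n / (fact a1 * fact k) * (J (n + 1) a1 (Suc k) s / real (Suc k)))" .
  have H: "frakH (Suc k) a1 s 0 = fact n / (fact (Suc k) * fact a1) * J (n + 1) a1 (Suc k) s"
    using H0_J[OF s, of "Suc k" a1] by (simp add: n_def)
  have fs: "fact (Suc k) = real (Suc k) * (fact k :: real)" by (simp only: fact_Suc)
  have sg: "(-1::real) ^ n * (-1) ^ n = 1" by (simp flip: power_add)
  show ?thesis unfolding dd H fs n_def[symmetric]
    using sg by (simp add: field_simps)
qed


lemma claim4_0:
  fixes s :: real
  assumes s: "s > 0"
  shows "frakH 0 a1 s 0 = (-1) ^ (0 + a1) * divdiff_1s 0 s (a1 + 1) L0"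
proof -
  define c where "c = (deriv ^^ a1) L0 s"
  define ys where "ys = replicate 0 1 @ replicate (a1 + 1) s"
  have len: "length ys - 1 = a1" by (simp add: ys_def)
  have yi: "\<And>i. i < a1 + 1 \<Longrightarrow> ys ! i = s" by (simp add: ys_def nth_Cons')
  have F: "(deriv ^^ a1) L0 ((1 - (\<Sum>j<a1. t j)) * ys ! 0 + (\<Sum>j<a1. t j * ys ! (j + 1))) = c * 1" for t
  proof -
    have "(\<Sum>j<a1. t j * ys ! (j + 1)) = (\<Sum>j<a1. t j * s)" by (intro sum.cong) (auto simp: yi)
    then have "(1 - (\<Sum>j<a1. t j)) * ys ! 0 + (\<Sum>j<a1. t j * ys ! (j + 1)) = s"
      by (simp add: yi sum_distrib_left[symmetric] sum_distrib_right[symmetric] algebra_simps)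
    then show ?thesis by (simp add: c_def)
  qed
  have dd: "divdiff_1s 0 s (a1 + 1) L0 = (\<integral>t\<in>simplex_std a1. c * 1 \<partial>PM {..<a1})"
    unfolding divdiff_1s_def divdiff_def Let_def ys_def[symmetric] len F ..
  have vol: "(\<integral>t\<in>simplex_std a1. c * 1 \<partial>PM {..<a1}) = c / fact a1"
  proof (cases "a1 = 0")
    case True
    have S: "simplex_std 0 = {\<lambda>_. undefined}"
      by (auto simp: simplex_std_def)
    show ?thesis using True
      by (simp add: PiM_empty S set_lebesgue_integral_def lebesgue_integral_count_space_finite)
  next
    case False
    then have a1: "a1 \<ge> 1" by simp
    have "(\<integral>t\<in>simplex_std a1. c * 1 \<partial>PM {..<a1}) =
          c * integral {0..1} (\<lambda>u. 1 * (u ^ (a1 - 1) / fact (a1 - 1) * ((1 - u) ^ 0 / fact 0)))"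
      by (rule D3sign[of a1 0 a1]) (use a1 in auto)
    also have "integral {0..1} (\<lambda>u::real. 1 * (u ^ (a1 - 1) / fact (a1 - 1) * ((1 - u) ^ 0 / fact 0))) = 1 / fact a1"
    proof -
      have "integral {0..1} (\<lambda>u::real. u ^ (a1 - 1) / fact (a1 - 1)) = 1 ^ Suc (a1 - 1) / fact (Suc (a1 - 1))"
        by (rule integral_unique[OF pow_hasint]) simp
      then show ?thesis using a1 by simp
    qed
    finally show ?thesis by simp
  qed
  have "Lm 0 = L0" by (rule ext) (simp add: Lm_eq)
  then have H: "frakH 0 a1 s 0 = (-1) ^ a1 / fact a1 * c"
    using claim5[OF s, of 0 a1] by (simp add: c_def)
  show ?thesis unfolding dd vol H by simp
qed

lemma claim4:
  fixes s :: real
  assumes s: "s > 0"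
  shows "frakH a0 a1 s 0 = (-1) ^ (a0 + a1) * divdiff_1s a0 s (a1 + 1) L0"
proof (cases a0)
  case 0 then show ?thesis using claim4_0[OF s] by simp
next
  case (Suc k) then show ?thesis using claim4_Suc[OF s] by simp
qed

theorem mainTheorem14:
  fixes a0 a1 :: nat and s :: real
  assumes "s > 0"
  shows "(\<forall>m\<le>a1.
            frakH a0 a1 s m =
              (-1) ^ (a1 + m) / (fact a0 * fact a1) * (1 / s ^ (a1 - m)) *
              (deriv ^^ a0) (\<lambda>t. t ^ (a0 + a1 - m) * (deriv ^^ a1) (Lm m) t) s
          \<and> frakH a0 a1 s m =
              (-1) ^ (a1 + m) / (fact a0 * fact a1) *
              (deriv ^^ a1) (\<lambda>t. t ^ m * (deriv ^^ a0) (Lm a0) t) s)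
       \<and> frakH a0 a1 s 0 = (-1) ^ (a0 + a1) * divdiff_1s (a0 + 1) s (a1 + 1) ln
       \<and> frakH a0 a1 s 0 = (-1) ^ (a0 + a1) * divdiff_1s a0 s (a1 + 1) L0
       \<and> frakH a0 a1 s 0 = (-1) ^ a1 / (fact a0 * fact a1) * (deriv ^^ (a0 + a1)) (Lm a0) s"
  using claim1[OF assms] claim2[OF assms] claim3[OF assms] claim4[OF assms] claim5[OF assms]
  by blast


end
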